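(* Let $n \geq 2$ and $m \geq 3$ be integers, let $\mathcal{V}=\mathcal{V}_1\otimes \dots \otimes \mathcal{V}_m$ be a tensor product of vector spaces over a field $\mathbb{F}$, and let $\{x_a: a \in [n]\}$ be a multiset of product tensors in $\mathcal{V}$ with $x_a=x_{a,1}\otimes\dots\otimes x_{a,m}$. For each $S \subseteq [n]$ and $J \subseteq [m]$, let $d_J^S=\dim\operatorname{span}\{\bigotimes_{j \in J} x_{a,j} : a \in S\}$. If for every subset $S \subseteq [n]$ with $2 \leq |S| \leq n$ there exists a partition $J_1 \sqcup \dots \sqcup J_t =[m]$ (which may depend on $S$) such that $2 |S| \leq \sum_{i \in [t]} (d_{J_i}^S-1)+1$, then $\sum_{a \in [n]} x_a$ constitutes a unique tensor rank decomposition.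
   Context: $[n]=\{1,\dots,n\}$. A product tensor is a non-zero tensor $z_1\otimes\dots\otimes z_m$, $z_j\in\mathcal{V}_j$. A decomposition $v=\sum_{a\in[n]}x_a$ into product tensors constitutes a unique tensor rank decomposition if for every non-negative integer $r\le n$ and every multiset of product tensors $\{y_a:a\in[r]\}$ with $v=\sum_{a\in[r]}y_a$, it holds that $r=n$ and $\{x_a\}=\{y_a\}$ as multisets. *)

theory Defs
  imports "HOL-Library.FuncSet" "HOL-Library.Disjoint_Sets" "HOL-Library.Multiset"
          "HOL-Library.Function_Algebras" "HOL.Vector_Spaces"
begin

text \<open>Coordinate model: the factor space V_j is the space of finitely supported
  functions B_j -> F (every vector space over F is of this form for a basis B_j).
  Tensors in V_J (J a set of factor indices) are functions on multi-indices
  iota :: nat => 'b (extensional on J) with values in F.\<close>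

definition fsupp_space :: "'b set \<Rightarrow> ('b \<Rightarrow> 'a::zero) set" where
  "fsupp_space B = {f. finite {b. f b \<noteq> 0} \<and> {b. f b \<noteq> 0} \<subseteq> B}"

definition ptensor :: "nat set \<Rightarrow> (nat \<Rightarrow> 'b \<Rightarrow> 'a::comm_semiring_1) \<Rightarrow> (nat \<Rightarrow> 'b) \<Rightarrow> 'a" where
  "ptensor J z = (\<lambda>\<iota>. if \<iota> \<in> extensional J then (\<Prod>j\<in>J. z j (\<iota> j)) else 0)"

definition is_product_tensor :: "(nat \<Rightarrow> 'b set) \<Rightarrow> nat \<Rightarrow> ((nat \<Rightarrow> 'b) \<Rightarrow> 'a::comm_semiring_1) \<Rightarrow> bool" where
  "is_product_tensor B m v \<longleftrightarrow> v \<noteq> 0 \<and>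
     (\<exists>z. (\<forall>j\<in>{1..m}. z j \<in> fsupp_space (B j)) \<and> v = ptensor {1..m} z)"

definition tscale :: "'a::times \<Rightarrow> ('c \<Rightarrow> 'a) \<Rightarrow> 'c \<Rightarrow> 'a" where
  "tscale c f = (\<lambda>\<iota>. c * f \<iota>)"

definition dJS :: "(nat \<Rightarrow> nat \<Rightarrow> 'b \<Rightarrow> 'a::field) \<Rightarrow> nat set \<Rightarrow> nat set \<Rightarrow> nat" where
  "dJS xf J S = vector_space.dim tscale ((\<lambda>a. ptensor J (xf a)) ` S)"

definition unique_tensor_rank_decomp ::
  "(nat \<Rightarrow> 'b set) \<Rightarrow> nat \<Rightarrow> nat \<Rightarrow> (nat \<Rightarrow> (nat \<Rightarrow> 'b) \<Rightarrow> 'a::field) \<Rightarrow> bool" where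
  "unique_tensor_rank_decomp B m n x \<longleftrightarrow>
     (\<forall>r y. r \<le> n \<and> (\<forall>a\<in>{1..r}. is_product_tensor B m (y a)) \<and>
            (\<Sum>a\<in>{1..r}. y a) = (\<Sum>a\<in>{1..n}. x a) \<longrightarrow>
            r = n \<and> image_mset y (mset_set {1..r}) = image_mset x (mset_set {1..n}))"

end

theory Submission
  imports Defs
begin

lemma tscale_vs: "vector_space (tscale :: 'a::field \<Rightarrow> ('c \<Rightarrow> 'a) \<Rightarrow> 'c \<Rightarrow> 'a)"
  by unfold_locales (auto simp: tscale_def fun_eq_iff algebra_simps)

interpretation tv: vector_space "tscale :: 'a::field \<Rightarrow> ('c \<Rightarrow> 'a) \<Rightarrow> 'c \<Rightarrow> 'a"
  by (rule tscale_vs)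

lemma sum_fun_apply: "(\<Sum>i\<in>I. f i) x = (\<Sum>i\<in>I. f i x)"
  by (induction I rule: infinite_finite_induct) auto

lemma tscale_apply: "tscale c f x = c * f x"
  by (simp add: tscale_def)

declare tscale_apply[simp]

lemma uminus_fun_apply': "(- f) x = - (f x)"
  by simp

definition supp_on :: "nat set \<Rightarrow> ((nat \<Rightarrow> 'b) \<Rightarrow> 'a::zero) \<Rightarrow> bool" where
  "supp_on X f \<longleftrightarrow> (\<forall>\<iota>. \<iota> \<notin> extensional X \<longrightarrow> f \<iota> = 0)"

definition mrg :: "nat set \<Rightarrow> (nat \<Rightarrow> 'b) \<Rightarrow> (nat \<Rightarrow> 'b) \<Rightarrow> nat \<Rightarrow> 'b" where
  "mrg X \<iota> \<kappa> = (\<lambda>i. if i \<in> X then \<iota> i else \<kappa> i)"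

definition fib :: "nat set \<Rightarrow> ((nat \<Rightarrow> 'b) \<Rightarrow> 'a::zero) \<Rightarrow> (nat \<Rightarrow> 'b) \<Rightarrow> (nat \<Rightarrow> 'b) \<Rightarrow> 'a" where
  "fib X x \<kappa> = (\<lambda>\<iota>. if \<iota> \<in> extensional X then x (mrg X \<iota> \<kappa>) else 0)"

definition tp :: "nat set \<Rightarrow> nat set \<Rightarrow> ((nat \<Rightarrow> 'b) \<Rightarrow> 'a::comm_semiring_1) \<Rightarrow> ((nat \<Rightarrow> 'b) \<Rightarrow> 'a) \<Rightarrow> (nat \<Rightarrow> 'b) \<Rightarrow> 'a" where
  "tp X Y g s = (\<lambda>\<iota>. if \<iota> \<in> extensional (X \<union> Y) then g (restrict \<iota> X) * s (restrict \<iota> Y) else 0)"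

lemma mrg_ext: "\<iota> \<in> extensional X \<Longrightarrow> \<kappa> \<in> extensional Y \<Longrightarrow> mrg X \<iota> \<kappa> \<in> extensional (X \<union> Y)"
  by (auto simp: mrg_def extensional_def)

lemma restrict_mrg1: "\<iota> \<in> extensional X \<Longrightarrow> restrict (mrg X \<iota> \<kappa>) X = \<iota>"
  by (auto simp: mrg_def extensional_def restrict_def fun_eq_iff)

lemma restrict_mrg2: "X \<inter> Y = {} \<Longrightarrow> \<kappa> \<in> extensional Y \<Longrightarrow> restrict (mrg X \<iota> \<kappa>) Y = \<kappa>"
  by (auto simp: mrg_def extensional_def restrict_def fun_eq_iff)

lemma mrg_restrict: "\<iota> \<in> extensional (X \<union> Y) \<Longrightarrow> mrg X (restrict \<iota> X) (restrict \<iota> Y) = \<iota>"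
  by (auto simp: mrg_def extensional_def restrict_def fun_eq_iff)

lemma mrg_sym: "X \<inter> Y = {} \<Longrightarrow> \<iota> \<in> extensional X \<Longrightarrow> \<kappa> \<in> extensional Y \<Longrightarrow> mrg Y \<kappa> \<iota> = mrg X \<iota> \<kappa>"
  by (auto simp: mrg_def extensional_def fun_eq_iff)

lemma tp_sym: "tp X Y g s = tp Y X s g"
  by (auto simp: tp_def fun_eq_iff Un_commute mult.commute)

lemma supp_on_tp: "supp_on (X \<union> Y) (tp X Y g s)"
  by (simp add: supp_on_def tp_def)

lemma fib_tp:
  assumes "X \<inter> Y = {}" "supp_on X g" "\<kappa> \<in> extensional Y"
  shows "fib X (tp X Y g s) \<kappa> = tscale (s \<kappa>) g"
proof
  fix \<iota>
  show "fib X (tp X Y g s) \<kappa> \<iota> = tscale (s \<kappa>) g \<iota>"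
  proof (cases "\<iota> \<in> extensional X")
    case True
    then show ?thesis using assms
      by (simp add: fib_def tp_def mrg_ext restrict_mrg1 restrict_mrg2 mult.commute tscale_apply)
  next
    case False
    then show ?thesis using assms by (simp add: fib_def supp_on_def tscale_apply)
  qed
qed

lemma fib_tp2:
  assumes "X \<inter> Y = {}" "supp_on Y s" "\<iota> \<in> extensional X"
  shows "fib Y (tp X Y g s) \<iota> = tscale (g \<iota>) s"
  using fib_tp[of Y X s \<iota> g] assms by (simp add: tp_sym Int_commute)

lemma fib_hom: "module_hom tscale tscale (\<lambda>x. fib X x \<kappa>)"
  by unfold_locales (auto simp: fib_def fun_eq_iff algebra_simps tscale_def)

lemma fib_add: "fib X (x + y) \<kappa> = fib X x \<kappa> + fib X (y::(nat \<Rightarrow> 'b) \<Rightarrow> 'a::field) \<kappa>"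
  using module_hom.add[OF fib_hom] by blast
lemma fib_scale: "fib X (tscale c x) \<kappa> = tscale c (fib X (x::(nat \<Rightarrow> 'b) \<Rightarrow> 'a::field) \<kappa>)"
  using module_hom.scale[OF fib_hom] by blast
lemma fib_sum: "fib X (\<Sum>i\<in>I. f i) \<kappa> = (\<Sum>i\<in>I. fib X (f i :: (nat \<Rightarrow> 'b) \<Rightarrow> 'a::field) \<kappa>)"
  by (auto simp: fib_def fun_eq_iff sum_fun_apply)
lemma fib_zero[simp]: "fib X 0 \<kappa> = 0"
  by (simp add: fib_def fun_eq_iff)
lemma fib_uminus: "fib X (- x) \<kappa> = - fib X (x::(nat \<Rightarrow> 'b) \<Rightarrow> 'a::field) \<kappa>"
  by (simp add: fib_def fun_eq_iff)

lemma fib_span: "(x::(nat \<Rightarrow> 'b) \<Rightarrow> 'a::field) \<in> tv.span S \<Longrightarrow> fib X x \<kappa> \<in> tv.span ((\<lambda>s. fib X s \<kappa>) ` S)"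
  using module_hom.span_image[OF fib_hom, of X \<kappa> S] by auto

lemma fib_zero_imp:
  assumes "supp_on (X \<union> Y) x" "\<And>\<kappa>. \<kappa> \<in> extensional Y \<Longrightarrow> fib X x \<kappa> = 0"
  shows "x = 0"
proof
  fix \<iota>
  show "x \<iota> = 0 \<iota>"
  proof (cases "\<iota> \<in> extensional (X \<union> Y)")
    case True
    have "fib X x (restrict \<iota> Y) (restrict \<iota> X) = 0"
      using assms(2)[of "restrict \<iota> Y"] by simp
    then show ?thesis using True by (simp add: fib_def mrg_restrict)
  next
    case False then show ?thesis using assms(1) by (simp add: supp_on_def)
  qed
qed

lemma supp_on_subspace: "tv.subspace {f::(nat \<Rightarrow> 'b) \<Rightarrow> 'a::field. supp_on X f}"
  by (auto simp: tv.subspace_def supp_on_def tscale_apply)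

lemma supp_on_span: "(\<And>f. f \<in> S \<Longrightarrow> supp_on X f) \<Longrightarrow> (x::(nat \<Rightarrow> 'b) \<Rightarrow> 'a::field) \<in> tv.span S \<Longrightarrow> supp_on X x"
  using tv.span_minimal[OF _ supp_on_subspace, of S X] by auto

lemma supp_on_fib: "supp_on X (fib X x \<kappa>)"
  by (simp add: supp_on_def fib_def)

lemma tp_scale1: "tp X Y (tscale c g) s = tscale c (tp X Y g (s::(nat \<Rightarrow> 'b) \<Rightarrow> 'a::field))"
  by (simp add: tp_def fun_eq_iff mult.assoc)
lemma tp_scale2: "tp X Y g (tscale c s) = tscale c (tp X Y g (s::(nat \<Rightarrow> 'b) \<Rightarrow> 'a::field))"
  by (simp add: tp_def fun_eq_iff algebra_simps)
lemma tp_add1: "tp X Y (g1 + g2) s = tp X Y g1 s + tp X Y g2 s"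
  by (simp add: tp_def fun_eq_iff algebra_simps)
lemma tp_add2: "tp X Y g (s1 + s2) = tp X Y g s1 + tp X Y g s2"
  by (simp add: tp_def fun_eq_iff algebra_simps)
lemma tp_zero1[simp]: "tp X Y 0 s = 0"
  by (simp add: tp_def fun_eq_iff)
lemma tp_zero2[simp]: "tp X Y g 0 = 0"
  by (simp add: tp_def fun_eq_iff)
lemma tp_sum1: "tp X Y (\<Sum>i\<in>I. f i) s = (\<Sum>i\<in>I. tp X Y (f i) (s::(nat \<Rightarrow> 'b) \<Rightarrow> 'a::field))"
  by (simp add: tp_def fun_eq_iff sum_fun_apply sum_distrib_right)
lemma tp_sum2: "tp X Y g (\<Sum>i\<in>I. f i) = (\<Sum>i\<in>I. tp X Y (g::(nat \<Rightarrow> 'b) \<Rightarrow> 'a::field) (f i))"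
  by (simp add: tp_def fun_eq_iff sum_fun_apply sum_distrib_left)

lemma tp_nonzero:
  assumes "X \<inter> Y = {}" "supp_on X g" "supp_on Y s" "g \<noteq> 0" "(s::(nat \<Rightarrow> 'b) \<Rightarrow> 'a::field) \<noteq> 0"
  shows "tp X Y g s \<noteq> 0"
proof
  assume h: "tp X Y g s = 0"
  obtain \<iota> where i: "g \<iota> \<noteq> 0" using assms(4) by (auto simp: fun_eq_iff)
  obtain \<kappa> where k: "s \<kappa> \<noteq> 0" using assms(5) by (auto simp: fun_eq_iff)
  have ie: "\<iota> \<in> extensional X" using i assms(2) by (auto simp: supp_on_def)
  have ke: "\<kappa> \<in> extensional Y" using k assms(3) by (auto simp: supp_on_def)
  have "fib X (tp X Y g s) \<kappa> \<iota> = s \<kappa> * g \<iota>" using fib_tp[OF assms(1,2) ke] by simp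
  then show False using h i k by simp
qed

lemma tp_nonzeroD:
  assumes "tp X Y g s \<noteq> 0" shows "g \<noteq> 0" "(s::(nat \<Rightarrow> 'b) \<Rightarrow> 'a::field) \<noteq> 0"
proof -
  show "g \<noteq> 0" using assms by (metis tp_zero1)
  show "s \<noteq> 0" using assms by (metis tp_zero2)
qed

lemma supp_on_ptensor: "supp_on J (ptensor J z)"
  by (simp add: supp_on_def ptensor_def)

lemma ptensor_split:
  assumes "finite M" "J \<subseteq> M"
  shows "ptensor M z = tp J (M - J) (ptensor J z) (ptensor (M - J) z)"
proof
  fix \<iota>
  have MJ: "J \<union> (M - J) = M" using assms by auto
  show "ptensor M z \<iota> = tp J (M - J) (ptensor J z) (ptensor (M - J) z) \<iota>"
  proof (cases "\<iota> \<in> extensional M")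
    case True
    have "(\<Prod>j\<in>M. z j (\<iota> j)) = (\<Prod>j\<in>J. z j (\<iota> j)) * (\<Prod>j\<in>M - J. z j (\<iota> j))"
      using prod.subset_diff[OF assms(2) assms(1)] by (simp add: mult.commute)
    have e1: "restrict \<iota> J \<in> extensional J" "restrict \<iota> (M - J) \<in> extensional (M - J)" by auto
    have p1: "ptensor J z (restrict \<iota> J) = (\<Prod>j\<in>J. z j (\<iota> j))"
      using e1 by (simp add: ptensor_def)
    have p2: "ptensor (M - J) z (restrict \<iota> (M - J)) = (\<Prod>j\<in>M - J. z j (\<iota> j))"
      using e1 by (simp add: ptensor_def)
    show ?thesis using True MJ p1 p2 \<open>(\<Prod>j\<in>M. z j (\<iota> j)) = _\<close>
      by (simp add: ptensor_def tp_def)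
  next
    case False
    then show ?thesis using MJ by (simp add: ptensor_def tp_def)
  qed
qed

declare tscale_apply[simp del]


type_synonym ('b,'a) tens = "(nat \<Rightarrow> 'b) \<Rightarrow> 'a"

lemma basis_fin:
  fixes V :: "('c \<Rightarrow> 'a::field) set"
  assumes "V \<subseteq> tv.span W" "finite W"
  obtains B where "B \<subseteq> V" "tv.independent B" "V \<subseteq> tv.span B" "card B = tv.dim V" "finite B"
proof -
  obtain B where B: "B \<subseteq> V" "tv.independent B" "V \<subseteq> tv.span B" "card B = tv.dim V"
    using tv.basis_exists by blast
  have "finite B" using tv.independent_span_bound[OF assms(2) B(2)] B(1) assms(1) by auto
  then show ?thesis using B that by blast
qed

lemma dim_mono':
  fixes V :: "('c \<Rightarrow> 'a::field) set"
  assumes "V \<subseteq> tv.span W" "finite W" shows "tv.dim V \<le> tv.dim W"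
proof -
  obtain B where B: "B \<subseteq> W" "tv.independent B" "W \<subseteq> tv.span B" "card B = tv.dim W" "finite B"
    using basis_fin[of W W] assms(2) tv.span_superset by blast
  have "V \<subseteq> tv.span B" using assms(1) B(3) by (metis tv.span_mono tv.span_span subset_trans)
  then show ?thesis using tv.dim_le_card[OF _ B(5)] B(4) by auto
qed

lemma dim_Un_card:
  fixes A :: "('c \<Rightarrow> 'a::field) set"
  assumes "finite A" "finite C" shows "tv.dim (A \<union> C) \<le> tv.dim A + card C"
proof -
  obtain B where B: "B \<subseteq> A" "tv.independent B" "A \<subseteq> tv.span B" "card B = tv.dim A" "finite B"
    using basis_fin[of A A] assms(1) tv.span_superset by blast
  have "A \<union> C \<subseteq> tv.span (B \<union> C)"
    using B(3) tv.span_mono[of B "B \<union> C"] tv.span_superset[of "B \<union> C"] by blast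
  then have "tv.dim (A \<union> C) \<le> card (B \<union> C)" using tv.dim_le_card B(5) assms(2) by blast
  also have "\<dots> \<le> card B + card C" by (rule card_Un_le)
  finally show ?thesis using B(4) by simp
qed

lemma dim_pos:
  fixes S :: "('c \<Rightarrow> 'a::field) set"
  assumes "finite S" "x \<in> tv.span S" "x \<noteq> 0" shows "1 \<le> tv.dim S"
proof (rule ccontr)
  assume "\<not> 1 \<le> tv.dim S"
  then have d: "tv.dim S = 0" by simp
  obtain B where B: "B \<subseteq> S" "tv.independent B" "S \<subseteq> tv.span B" "card B = tv.dim S" "finite B"
    using basis_fin[of S S] assms(1) tv.span_superset by blast
  then have "B = {}" using d by simp
  then have "tv.span S \<subseteq> {0}" using B(3) by (metis tv.span_empty tv.span_minimal tv.subspace_span)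
  then show False using assms by auto
qed

lemma span_idx:
  fixes g :: "'i \<Rightarrow> 'c \<Rightarrow> 'a::field"
  assumes "finite L" "x \<in> tv.span (g ` L)"
  shows "\<exists>c. x = (\<Sum>l\<in>L. tscale (c l) (g l))"
  using assms
proof (induction L arbitrary: x rule: finite_induct)
  case empty
  then show ?case by simp
next
  case (insert a L)
  from insert.prems obtain k where k: "x - tscale k (g a) \<in> tv.span (g ` L)"
    using tv.span_breakdown_eq[of x "g a" "g ` L"] by auto
  from insert.IH[OF k] obtain c where c: "x - tscale k (g a) = (\<Sum>l\<in>L. tscale (c l) (g l))" by blast
  have s1: "(\<Sum>l\<in>L. tscale ((c(a := k)) l) (g l)) = (\<Sum>l\<in>L. tscale (c l) (g l))"
    using insert.hyps(2) by (intro sum.cong) auto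
  have "(\<Sum>l\<in>insert a L. tscale ((c(a := k)) l) (g l)) = tscale k (g a) + (\<Sum>l\<in>L. tscale (c l) (g l))"
    using insert.hyps s1 by (simp add: sum.insert)
  also have "\<dots> = x" using c by (simp add: algebra_simps)
  finally show ?case by metis
qed

lemma span_Union_sum:
  fixes S :: "'i \<Rightarrow> ('c \<Rightarrow> 'a::field) set"
  assumes "finite I" "x \<in> tv.span (\<Union>i\<in>I. S i)"
  shows "\<exists>f. (\<forall>i\<in>I. f i \<in> tv.span (S i)) \<and> x = (\<Sum>i\<in>I. f i)"
  using assms
proof (induction I arbitrary: x rule: finite_induct)
  case empty
  then show ?case by simp
next
  case (insert a I)
  have "x \<in> tv.span (S a \<union> (\<Union>i\<in>I. S i))" using insert.prems by simp
  then obtain y z where yz: "x = y + z" "y \<in> tv.span (S a)" "z \<in> tv.span (\<Union>i\<in>I. S i)"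
    unfolding tv.span_Un by blast
  from insert.IH[OF yz(3)] obtain f where f: "\<forall>i\<in>I. f i \<in> tv.span (S i)" "z = (\<Sum>i\<in>I. f i)" by blast
  have s1: "(\<Sum>i\<in>I. (f(a := y)) i) = (\<Sum>i\<in>I. f i)"
    using insert.hyps(2) by (intro sum.cong) auto
  have "(\<Sum>i\<in>insert a I. (f(a := y)) i) = x"
    using insert.hyps s1 yz f by (simp add: sum.insert)
  moreover have "\<forall>i\<in>insert a I. (f(a := y)) i \<in> tv.span (S i)" using f yz by auto
  ultimately show ?case by metis
qed


lemma indep_Un:
  fixes A :: "('c \<Rightarrow> 'a::field) set"
  assumes "tv.independent A" "tv.independent B" "tv.span A \<inter> tv.span B \<subseteq> {0}"
  shows "tv.independent (A \<union> B)" "A \<inter> B = {}"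
proof -
  show "A \<inter> B = {}"
  proof (rule ccontr)
    assume "A \<inter> B \<noteq> {}"
    then obtain a where a: "a \<in> A" "a \<in> B" by blast
    have "a \<in> tv.span A" "a \<in> tv.span B" using a tv.span_base by auto
    then have "a = 0" using assms(3) by auto
    then have "tv.dependent A" using a(1) tv.dependent_zero by simp
    then show False using assms(1) by simp
  qed
  show "tv.independent (A \<union> B)"
    unfolding tv.independent_explicit_module
  proof (intro allI impI)
    fix t u v
    assume ft: "finite t" and tAB: "t \<subseteq> A \<union> B" and s0: "(\<Sum>v\<in>t. tscale (u v) v) = 0" and vt: "v \<in> t"
    define y where "y = (\<Sum>v\<in>t \<inter> A. tscale (u v) v)"
    define z where "z = (\<Sum>v\<in>t - A. tscale (u v) v)"
    have split: "y + z = 0" unfolding y_def z_def using s0 sum.Int_Diff[OF ft, of _ A] by metis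
    have yA: "y \<in> tv.span A" unfolding y_def
      by (intro tv.span_sum tv.span_scale tv.span_base) auto
    have zB: "z \<in> tv.span B" unfolding z_def
      using tAB by (intro tv.span_sum tv.span_scale tv.span_base) auto
    have "y = - z" using split by (simp add: eq_neg_iff_add_eq_0)
    then have "y \<in> tv.span B" using zB tv.span_neg by metis
    then have y0: "y = 0" using yA assms(3) by auto
    then have z0: "z = 0" using split by simp
    show "u v = 0"
    proof (cases "v \<in> A")
      case True
      have "t \<inter> A \<subseteq> A" "finite (t \<inter> A)" "v \<in> t \<inter> A" using ft vt True by auto
      then show ?thesis using tv.independentD[OF assms(1)] y0 unfolding y_def by blast
    next
      case False
      have "t - A \<subseteq> B" "finite (t - A)" "v \<in> t - A" using ft vt tAB False by auto
      then show ?thesis using tv.independentD[OF assms(2)] z0 unfolding z_def by blast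
    qed
  qed
qed

lemma span_sub_span: "A \<subseteq> tv.span B \<Longrightarrow> tv.span A \<subseteq> tv.span (B :: ('c \<Rightarrow> 'a::field) set)"
  using tv.span_minimal[OF _ tv.subspace_span] by blast

lemma dim_direct:
  fixes A :: "('c \<Rightarrow> 'a::field) set"
  assumes "finite A" "finite B" "tv.span A \<inter> tv.span B \<subseteq> {0}"
  shows "tv.dim (A \<union> B) = tv.dim A + tv.dim B"
proof -
  obtain BA where BA: "BA \<subseteq> A" "tv.independent BA" "A \<subseteq> tv.span BA" "card BA = tv.dim A" "finite BA"
    using basis_fin[of A A] assms(1) tv.span_superset by blast
  obtain BB where BB: "BB \<subseteq> B" "tv.independent BB" "B \<subseteq> tv.span BB" "card BB = tv.dim B" "finite BB"
    using basis_fin[of B B] assms(2) tv.span_superset by blast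
  have "tv.span BA \<subseteq> tv.span A" "tv.span BB \<subseteq> tv.span B" using tv.span_mono[OF BA(1)] tv.span_mono[OF BB(1)] by auto
  then have "tv.span BA \<inter> tv.span BB \<subseteq> {0}" using assms(3) by blast
  note iu = indep_Un[OF BA(2) BB(2) this]
  have s1: "BA \<union> BB \<subseteq> tv.span (A \<union> B)"
    using BA(1) BB(1) tv.span_superset[of "A \<union> B"] by blast
  have s2: "A \<union> B \<subseteq> tv.span (BA \<union> BB)"
    using BA(3) BB(3) tv.span_mono[of BA "BA \<union> BB"] tv.span_mono[of BB "BA \<union> BB"] by blast
  have "tv.span (BA \<union> BB) = tv.span (A \<union> B)"
    using span_sub_span[OF s1] span_sub_span[OF s2] by blast
  then have "tv.dim (A \<union> B) = card (BA \<union> BB)"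
    using tv.dim_eq_card[OF _ iu(1)] by metis
  then show ?thesis using card_Un_disjoint[OF BA(5) BB(5) iu(2)] BA(4) BB(4) by simp
qed

lemma dim_dep:
  fixes w :: "'i \<Rightarrow> 'c \<Rightarrow> 'a::field"
  assumes "finite E" "(\<Sum>e\<in>E. tscale (c e) (w e)) = 0" "e0 \<in> E" "c e0 \<noteq> 0"
  shows "tv.dim (w ` E) + 1 \<le> card E"
proof -
  define r where "r = (\<Sum>e\<in>E - {e0}. tscale (c e) (w e))"
  have "tscale (c e0) (w e0) + r = 0"
    using assms(2) sum.remove[OF assms(1,3), of "\<lambda>e. tscale (c e) (w e)"] unfolding r_def by simp
  then have h: "tscale (c e0) (w e0) = - r" by (simp add: eq_neg_iff_add_eq_0)
  have "w e0 = tscale (inverse (c e0)) (tscale (c e0) (w e0))"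
    using assms(4) by (simp add: tv.scale_scale)
  then have we: "w e0 = tscale (inverse (c e0)) (- r)" using h by simp
  have "tscale (inverse (c e0)) (- r) \<in> tv.span (w ` (E - {e0}))"
    unfolding r_def by (intro tv.span_scale tv.span_neg tv.span_sum tv.span_base) auto
  then have w0: "w e0 \<in> tv.span (w ` (E - {e0}))" using we by simp
  have sub: "w ` E \<subseteq> tv.span (w ` (E - {e0}))"
  proof
    fix x assume "x \<in> w ` E"
    then obtain e where e: "e \<in> E" "x = w e" by blast
    show "x \<in> tv.span (w ` (E - {e0}))"
    proof (cases "e = e0")
      case True then show ?thesis using w0 e by simp
    next
      case False then show ?thesis using e by (intro tv.span_base) auto
    qed
  qed
  have f2: "finite (w ` (E - {e0}))" using assms(1) by simp
  have "tv.dim (w ` E) \<le> card (w ` (E - {e0}))" using tv.dim_le_card[OF sub f2] .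
  also have "\<dots> \<le> card (E - {e0})" using assms(1) card_image_le by blast
  also have "\<dots> = card E - 1" using assms(1,3) by simp
  finally have "tv.dim (w ` E) \<le> card E - 1" .
  moreover have "card E > 0" using assms(1,3) card_gt_0_iff by blast
  ultimately show ?thesis by linarith
qed

lemma mon_step:
  fixes X Y :: "('c \<Rightarrow> 'a::field) set"
  assumes f: "finite X" "finite Y" "X \<subseteq> tv.span Y"
  shows "\<exists>C. finite C \<and> card C + tv.dim X = tv.dim Y \<and> Y \<subseteq> tv.span (X \<union> C)"
proof -
  obtain BX where BX: "BX \<subseteq> X" "tv.independent BX" "X \<subseteq> tv.span BX" "card BX = tv.dim X" "finite BX"
    using basis_fin[of X X] f tv.span_superset by blast
  have sub: "BX \<subseteq> BX \<union> Y" by blast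
  obtain B where B: "BX \<subseteq> B" "B \<subseteq> BX \<union> Y" "tv.independent B" "BX \<union> Y \<subseteq> tv.span B"
    by (rule tv.maximal_independent_subset_extend[OF sub BX(2)])
  have fB: "finite B" using B(2) BX(5) f(2) finite_subset by blast
  have "BX \<subseteq> tv.span Y" using BX(1) f(3) by blast
  moreover have "Y \<subseteq> tv.span Y" by (rule tv.span_superset)
  ultimately have "B \<subseteq> tv.span Y" using B(2) by blast
  then have "tv.span B \<subseteq> tv.span Y" by (rule span_sub_span)
  moreover have "tv.span Y \<subseteq> tv.span B" using B(4) span_sub_span[of Y B] by blast
  ultimately have "tv.span B = tv.span Y" by blast
  then have cB: "card B = tv.dim Y" using tv.dim_eq_card[OF _ B(3)] by metis
  have c2: "card (B - BX) + card BX = card B"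
    using card_Diff_subset[OF BX(5) B(1)] card_mono[OF fB B(1)] by simp
  have "B \<subseteq> tv.span (X \<union> (B - BX))"
  proof
    fix b assume b: "b \<in> B"
    show "b \<in> tv.span (X \<union> (B - BX))"
    proof (cases "b \<in> BX")
      case True then show ?thesis using BX(1) by (intro tv.span_base) auto
    next
      case False then show ?thesis using b by (intro tv.span_base) auto
    qed
  qed
  then have "tv.span B \<subseteq> tv.span (X \<union> (B - BX))" by (rule span_sub_span)
  then have "Y \<subseteq> tv.span (X \<union> (B - BX))" using B(4) by blast
  then show ?thesis using fB c2 BX(4) cB by (intro exI[of _ "B - BX"]) auto
qed

lemma mon_core:
  fixes X Y :: "'i \<Rightarrow> ('c \<Rightarrow> 'a::field) set"
  assumes "finite K" "\<And>i. i \<in> K \<Longrightarrow> finite (X i) \<and> finite (Y i) \<and> X i \<subseteq> tv.span (Y i)"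
  shows "tv.dim (\<Union>i\<in>K. Y i) + (\<Sum>i\<in>K. tv.dim (X i)) \<le> tv.dim (\<Union>i\<in>K. X i) + (\<Sum>i\<in>K. tv.dim (Y i))"
proof -
  have ex: "\<forall>i\<in>K. \<exists>C. finite C \<and> card C + tv.dim (X i) = tv.dim (Y i) \<and> Y i \<subseteq> tv.span (X i \<union> C)"
  proof
    fix i assume i: "i \<in> K"
    show "\<exists>C. finite C \<and> card C + tv.dim (X i) = tv.dim (Y i) \<and> Y i \<subseteq> tv.span (X i \<union> C)"
      using assms(2)[OF i] by (intro mon_step) auto
  qed
  then obtain C where C: "\<forall>i\<in>K. finite (C i) \<and> card (C i) + tv.dim (X i) = tv.dim (Y i) \<and> Y i \<subseteq> tv.span (X i \<union> C i)"
    using bchoice[OF ex] by (elim exE) (rule that)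
  have fX: "finite (\<Union>i\<in>K. X i)" using assms by auto
  have fC: "finite (\<Union>i\<in>K. C i)" using assms(1) C by auto
  have "(\<Union>i\<in>K. Y i) \<subseteq> tv.span ((\<Union>i\<in>K. X i) \<union> (\<Union>i\<in>K. C i))"
  proof
    fix y assume "y \<in> (\<Union>i\<in>K. Y i)"
    then obtain i where i: "i \<in> K" "y \<in> Y i" by blast
    then have "y \<in> tv.span (X i \<union> C i)" using C i by auto
    moreover have "X i \<union> C i \<subseteq> (\<Union>i\<in>K. X i) \<union> (\<Union>i\<in>K. C i)" using i by blast
    ultimately show "y \<in> tv.span ((\<Union>i\<in>K. X i) \<union> (\<Union>i\<in>K. C i))" using tv.span_mono[of "X i \<union> C i"] by auto
  qed
  then have "tv.dim (\<Union>i\<in>K. Y i) \<le> tv.dim ((\<Union>i\<in>K. X i) \<union> (\<Union>i\<in>K. C i))"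
    by (rule dim_mono') (use fX fC in auto)
  also have "\<dots> \<le> tv.dim (\<Union>i\<in>K. X i) + card (\<Union>i\<in>K. C i)" by (rule dim_Un_card[OF fX fC])
  also have "card (\<Union>i\<in>K. C i) \<le> (\<Sum>i\<in>K. card (C i))" by (rule card_UN_le[OF assms(1)])
  finally have 1: "tv.dim (\<Union>i\<in>K. Y i) \<le> tv.dim (\<Union>i\<in>K. X i) + (\<Sum>i\<in>K. card (C i))" by simp
  have "(\<Sum>i\<in>K. card (C i)) + (\<Sum>i\<in>K. tv.dim (X i)) = (\<Sum>i\<in>K. card (C i) + tv.dim (X i))"
    by (simp add: sum.distrib)
  also have "\<dots> = (\<Sum>i\<in>K. tv.dim (Y i))" using C by (intro sum.cong) auto
  finally show ?thesis using 1 by linarith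
qed


lemma rel_in_span:
  fixes w :: "'i \<Rightarrow> 'c \<Rightarrow> 'a::field"
  assumes "finite E" "(\<Sum>e\<in>E. tscale (c e) (w e)) = 0" "e0 \<in> E" "c e0 \<noteq> 0"
  shows "w e0 \<in> tv.span (w ` (E - {e0}))"
proof -
  define r where "r = (\<Sum>e\<in>E - {e0}. tscale (c e) (w e))"
  have "tscale (c e0) (w e0) + r = 0"
    using assms(2) sum.remove[OF assms(1,3), of "\<lambda>e. tscale (c e) (w e)"] unfolding r_def by simp
  then have h: "tscale (c e0) (w e0) = - r" by (simp add: eq_neg_iff_add_eq_0)
  have "w e0 = tscale (inverse (c e0)) (tscale (c e0) (w e0))"
    using assms(4) by (simp add: tv.scale_scale)
  then have we: "w e0 = tscale (inverse (c e0)) (- r)" using h by simp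
  have "tscale (inverse (c e0)) (- r) \<in> tv.span (w ` (E - {e0}))"
    unfolding r_def by (intro tv.span_scale tv.span_neg tv.span_sum tv.span_base) auto
  then show ?thesis using we by simp
qed

lemma supp_on_add: "supp_on X f \<Longrightarrow> supp_on X g \<Longrightarrow> supp_on X (f + (g::('b,'a::field) tens))"
  by (simp add: supp_on_def)
lemma supp_on_scale: "supp_on X f \<Longrightarrow> supp_on X (tscale c (f::('b,'a::field) tens))"
  by (simp add: supp_on_def tscale_apply)
lemma supp_on_sum: "(\<And>i. i \<in> I \<Longrightarrow> supp_on X (f i)) \<Longrightarrow> supp_on X (\<Sum>i\<in>I. (f i :: ('b,'a::field) tens))"
  by (simp add: supp_on_def sum_fun_apply)

lemma fib_tp_sum:
  fixes g r :: "'i \<Rightarrow> ('b,'a::field) tens"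
  assumes "X \<inter> Y = {}" "\<forall>l\<in>L. supp_on X (g l)" "\<kappa> \<in> extensional Y"
  shows "fib X (\<Sum>l\<in>L. tp X Y (g l) (r l)) \<kappa> = (\<Sum>l\<in>L. tscale (r l \<kappa>) (g l))"
  unfolding fib_sum using fib_tp[OF assms(1) _ assms(3)] assms(2) by (intro sum.cong) auto

lemma tens_rel:
  fixes g r :: "'i \<Rightarrow> ('b,'a::field) tens"
  assumes "X \<inter> Y = {}" "finite L" "\<forall>l\<in>L. supp_on X (g l) \<and> supp_on Y (r l)"
    "(\<Sum>l\<in>L. tp X Y (g l) (r l)) = 0"
  shows "tv.dim (r ` L) + tv.dim (g ` L) \<le> card L"
  using assms(2-)
proof (induction "card L" arbitrary: L r rule: less_induct)
  case less
  note fL = less.prems(1)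
  show ?case
  proof (cases "\<exists>l0\<in>L. g l0 \<in> tv.span (g ` (L - {l0}))")
    case False
    have r0: "r l = 0" if l: "l \<in> L" for l
    proof
      fix \<kappa>
      show "r l \<kappa> = 0 \<kappa>"
      proof (cases "\<kappa> \<in> extensional Y")
        case True
        have "fib X (\<Sum>l\<in>L. tp X Y (g l) (r l)) \<kappa> = 0" using less.prems(3) by simp
        then have s: "(\<Sum>l\<in>L. tscale (r l \<kappa>) (g l)) = 0"
          using fib_tp_sum[OF assms(1) _ True, of L g r] less.prems(2) by simp
        show ?thesis
        proof (rule ccontr)
          assume "r l \<kappa> \<noteq> 0 \<kappa>"
          then have "r l \<kappa> \<noteq> 0" by simp
          then have "g l \<in> tv.span (g ` (L - {l}))" using rel_in_span[OF fL s l] by simp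
          then show False using False l by blast
        qed
      next
        case False
        then show ?thesis using less.prems(2) l by (simp add: supp_on_def)
      qed
    qed
    have "r ` L \<subseteq> tv.span {}" using r0 tv.span_zero by auto
    then have "tv.dim (r ` L) \<le> card ({} :: ('b,'a) tens set)" by (intro tv.dim_le_card) auto
    then have d1: "tv.dim (r ` L) = 0" by simp
    have "tv.dim (g ` L) \<le> card (g ` L)" using fL by (intro tv.dim_le_card') auto
    also have "\<dots> \<le> card L" using fL card_image_le by blast
    finally show ?thesis using d1 by simp
  next
    case True
    then obtain l0 where l0: "l0 \<in> L" "g l0 \<in> tv.span (g ` (L - {l0}))" by blast
    have fL': "finite (L - {l0})" using fL by simp
    obtain lam where lam: "g l0 = (\<Sum>l\<in>L - {l0}. tscale (lam l) (g l))"
      using span_idx[OF fL' l0(2)] by blast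
    define r' where "r' = (\<lambda>l. r l + tscale (lam l) (r l0))"
    have supp': "\<forall>l\<in>L - {l0}. supp_on X (g l) \<and> supp_on Y (r' l)"
      using less.prems(2) l0(1) unfolding r'_def by (auto intro!: supp_on_add supp_on_scale)
    have "(\<Sum>l\<in>L - {l0}. tp X Y (g l) (r' l))
        = (\<Sum>l\<in>L - {l0}. tp X Y (g l) (r l)) + (\<Sum>l\<in>L - {l0}. tp X Y (tscale (lam l) (g l)) (r l0))"
      unfolding r'_def by (simp add: tp_add2 tp_scale2 tp_scale1 sum.distrib)
    also have "(\<Sum>l\<in>L - {l0}. tp X Y (tscale (lam l) (g l)) (r l0)) = tp X Y (g l0) (r l0)"
      unfolding lam tp_sum1 ..
    also have "(\<Sum>l\<in>L - {l0}. tp X Y (g l) (r l)) + tp X Y (g l0) (r l0) = (\<Sum>l\<in>L. tp X Y (g l) (r l))"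
      using sum.remove[OF fL l0(1), of "\<lambda>l. tp X Y (g l) (r l)"] by (simp add: add.commute)
    finally have rel': "(\<Sum>l\<in>L - {l0}. tp X Y (g l) (r' l)) = 0" using less.prems(3) by simp
    have cL: "card (L - {l0}) < card L" using fL l0(1) by (rule card_Diff1_less)
    have IH: "tv.dim (r' ` (L - {l0})) + tv.dim (g ` (L - {l0})) \<le> card (L - {l0})"
      using less.hyps[OF cL fL' supp' rel'] .
    have "r ` L \<subseteq> tv.span (r' ` (L - {l0}) \<union> {r l0})"
    proof
      fix x assume "x \<in> r ` L"
      then obtain l where l: "l \<in> L" "x = r l" by blast
      show "x \<in> tv.span (r' ` (L - {l0}) \<union> {r l0})"
      proof (cases "l = l0")
        case True then show ?thesis using l by (intro tv.span_base) auto
      next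
        case False
        have "r' l \<in> tv.span (r' ` (L - {l0}) \<union> {r l0})" using False l by (intro tv.span_base) auto
        moreover have "tscale (lam l) (r l0) \<in> tv.span (r' ` (L - {l0}) \<union> {r l0})"
          by (intro tv.span_scale tv.span_base) auto
        ultimately have "r' l - tscale (lam l) (r l0) \<in> tv.span (r' ` (L - {l0}) \<union> {r l0})"
          by (rule tv.span_diff)
        then show ?thesis using l unfolding r'_def by simp
      qed
    qed
    then have "tv.dim (r ` L) \<le> tv.dim (r' ` (L - {l0}) \<union> {r l0})"
      by (rule dim_mono') (use fL' in auto)
    also have "\<dots> \<le> tv.dim (r' ` (L - {l0})) + card {r l0}"
      by (rule dim_Un_card) (use fL' in auto)
    finally have d1: "tv.dim (r ` L) \<le> tv.dim (r' ` (L - {l0})) + 1" by simp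
    have "g ` L \<subseteq> tv.span (g ` (L - {l0}))"
    proof
      fix x assume "x \<in> g ` L"
      then obtain l where l: "l \<in> L" "x = g l" by blast
      show "x \<in> tv.span (g ` (L - {l0}))"
      proof (cases "l = l0")
        case True then show ?thesis using l l0 by simp
      next
        case False then show ?thesis using l by (intro tv.span_base) auto
      qed
    qed
    then have d2: "tv.dim (g ` L) \<le> tv.dim (g ` (L - {l0}))"
      by (rule dim_mono') (use fL' in auto)
    have "card (L - {l0}) + 1 = card L" using fL l0(1) cL by simp
    then show ?thesis using IH d1 d2 by linarith
  qed
qed

lemma tens_rep:
  fixes x :: "('b,'a::field) tens"
  assumes "X \<inter> Y = {}" "supp_on (X \<union> Y) x" "finite \<beta>" "tv.independent \<beta>"
    "\<forall>\<kappa>\<in>extensional Y. fib X x \<kappa> \<in> tv.span \<beta>"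
  shows "\<exists>r. (\<forall>g. supp_on Y (r g)) \<and> x = (\<Sum>g\<in>\<beta>. tp X Y g (r g))"
proof -
  define r where "r = (\<lambda>g \<kappa>. if \<kappa> \<in> extensional Y then tv.representation \<beta> (fib X x \<kappa>) g else 0)"
  have "x = (\<Sum>g\<in>\<beta>. tp X Y g (r g))"
  proof
    fix \<iota>
    show "x \<iota> = (\<Sum>g\<in>\<beta>. tp X Y g (r g)) \<iota>"
    proof (cases "\<iota> \<in> extensional (X \<union> Y)")
      case True
      define \<kappa> where "\<kappa> = restrict \<iota> Y"
      define \<iota>' where "\<iota>' = restrict \<iota> X"
      have ke: "\<kappa> \<in> extensional Y" and ie: "\<iota>' \<in> extensional X" unfolding \<kappa>_def \<iota>'_def by auto
      have "x \<iota> = fib X x \<kappa> \<iota>'" using ie True by (simp add: fib_def \<kappa>_def \<iota>'_def mrg_restrict)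
      also have "fib X x \<kappa> = (\<Sum>g\<in>\<beta>. tscale (tv.representation \<beta> (fib X x \<kappa>) g) g)"
        using tv.sum_representation_eq[OF assms(4) _ assms(3) order_refl] assms(5) ke by simp
      finally have "x \<iota> = (\<Sum>g\<in>\<beta>. tv.representation \<beta> (fib X x \<kappa>) g * g \<iota>')"
        by (simp add: sum_fun_apply tscale_apply)
      moreover have "(\<Sum>g\<in>\<beta>. tp X Y g (r g)) \<iota> = (\<Sum>g\<in>\<beta>. g \<iota>' * tv.representation \<beta> (fib X x \<kappa>) g)"
        unfolding sum_fun_apply using True ke by (simp add: tp_def r_def \<kappa>_def \<iota>'_def)
      ultimately show ?thesis by (simp add: mult.commute)
    next
      case False
      then show ?thesis using assms(2) by (simp add: supp_on_def sum_fun_apply tp_def)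
    qed
  qed
  moreover have "\<forall>g. supp_on Y (r g)" by (simp add: supp_on_def r_def)
  ultimately show ?thesis by blast
qed


lemma ker_bound:
  fixes q :: "'i \<Rightarrow> ('b,'a::field) tens" and GA :: "'i \<Rightarrow> ('b,'a) tens set"
  assumes XY: "X \<inter> Y = {}" and fK: "finite K" and q0: "(\<Sum>i\<in>K. q i) = 0"
    and hyp: "\<forall>i\<in>K. supp_on (X \<union> Y) (q i) \<and> finite (GA i) \<and> (\<forall>g\<in>GA i. supp_on X g)
       \<and> (\<forall>\<kappa>\<in>extensional Y. fib X (q i) \<kappa> \<in> tv.span (GA i))"
  shows "tv.dim (\<Union>i\<in>K. {fib Y (q i) \<iota> | \<iota>. \<iota> \<in> extensional X}) + tv.dim (\<Union>i\<in>K. GA i)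
           \<le> (\<Sum>i\<in>K. tv.dim (GA i))"
proof -
  have exb: "\<forall>i\<in>K. \<exists>B. B \<subseteq> GA i \<and> tv.independent B \<and> GA i \<subseteq> tv.span B \<and> card B = tv.dim (GA i) \<and> finite B"
  proof
    fix i assume i: "i \<in> K"
    have "finite (GA i)" using hyp i by blast
    then obtain B where "B \<subseteq> GA i" "tv.independent B" "GA i \<subseteq> tv.span B" "card B = tv.dim (GA i)" "finite B"
      using basis_fin[of "GA i" "GA i"] tv.span_superset by blast
    then show "\<exists>B. B \<subseteq> GA i \<and> tv.independent B \<and> GA i \<subseteq> tv.span B \<and> card B = tv.dim (GA i) \<and> finite B"
      by blast
  qed
  obtain \<beta> where \<beta>: "\<forall>i\<in>K. \<beta> i \<subseteq> GA i \<and> tv.independent (\<beta> i) \<and> GA i \<subseteq> tv.span (\<beta> i) \<and> card (\<beta> i) = tv.dim (GA i) \<and> finite (\<beta> i)"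
    using bchoice[OF exb] by (elim exE) (rule that)
  have exr: "\<forall>i\<in>K. \<exists>r. (\<forall>g. supp_on Y (r g)) \<and> q i = (\<Sum>g\<in>\<beta> i. tp X Y g (r g))"
  proof
    fix i assume i: "i \<in> K"
    have b: "\<beta> i \<subseteq> GA i" "tv.independent (\<beta> i)" "GA i \<subseteq> tv.span (\<beta> i)" "finite (\<beta> i)"
      using \<beta> i by auto
    have h: "supp_on (X \<union> Y) (q i)" "\<forall>\<kappa>\<in>extensional Y. fib X (q i) \<kappa> \<in> tv.span (GA i)"
      using hyp i by auto
    have "\<forall>\<kappa>\<in>extensional Y. fib X (q i) \<kappa> \<in> tv.span (\<beta> i)"
      using h(2) span_sub_span[OF b(3)] by blast
    then show "\<exists>r. (\<forall>g. supp_on Y (r g)) \<and> q i = (\<Sum>g\<in>\<beta> i. tp X Y g (r g))"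
      by (rule tens_rep[OF XY h(1) b(4) b(2)])
  qed
  obtain r where r: "\<forall>i\<in>K. (\<forall>g. supp_on Y (r i g)) \<and> q i = (\<Sum>g\<in>\<beta> i. tp X Y g (r i g))"
    using bchoice[OF exr] by (elim exE) (rule that)
  define L where "L = Sigma K \<beta>"
  have fL: "finite L" unfolding L_def using fK \<beta> by auto
  have suppG: "\<forall>i\<in>K. \<forall>g\<in>\<beta> i. supp_on X g" using \<beta> hyp by blast
  have rel: "(\<Sum>l\<in>L. tp X Y (snd l) (case_prod r l)) = 0"
  proof -
    have "(\<Sum>l\<in>L. tp X Y (snd l) (case_prod r l)) = (\<Sum>i\<in>K. \<Sum>g\<in>\<beta> i. tp X Y g (r i g))"
      unfolding L_def using fK \<beta> by (subst sum.Sigma) (auto intro!: sum.cong split: prod.splits)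
    also have "\<dots> = (\<Sum>i\<in>K. q i)" using r by (intro sum.cong) auto
    finally show ?thesis using q0 by simp
  qed
  have supL: "\<forall>l\<in>L. supp_on X (snd l) \<and> supp_on Y (case_prod r l)"
    unfolding L_def using suppG r by auto
  have tr: "tv.dim (case_prod r ` L) + tv.dim (snd ` L) \<le> card L"
    by (rule tens_rel[OF XY fL supL rel])
  have cL: "card L = (\<Sum>i\<in>K. tv.dim (GA i))"
  proof -
    have "card L = (\<Sum>i\<in>K. card (\<beta> i))" unfolding L_def using fK \<beta> by (subst card_SigmaI) auto
    also have "\<dots> = (\<Sum>i\<in>K. tv.dim (GA i))" using \<beta> by (intro sum.cong) auto
    finally show ?thesis .
  qed
  have fstL: "snd ` L = (\<Union>i\<in>K. \<beta> i)" unfolding L_def by force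
  have "tv.span (\<Union>i\<in>K. \<beta> i) = tv.span (\<Union>i\<in>K. GA i)"
  proof -
    have 1: "(\<Union>i\<in>K. \<beta> i) \<subseteq> tv.span (\<Union>i\<in>K. GA i)"
      using \<beta> tv.span_superset[of "\<Union>i\<in>K. GA i"] by blast
    have 2: "(\<Union>i\<in>K. GA i) \<subseteq> tv.span (\<Union>i\<in>K. \<beta> i)"
    proof
      fix x assume "x \<in> (\<Union>i\<in>K. GA i)"
      then obtain i where i: "i \<in> K" "x \<in> GA i" by blast
      then have "x \<in> tv.span (\<beta> i)" using \<beta> by blast
      moreover have "tv.span (\<beta> i) \<subseteq> tv.span (\<Union>i\<in>K. \<beta> i)" using i by (intro tv.span_mono) auto
      ultimately show "x \<in> tv.span (\<Union>i\<in>K. \<beta> i)" by blast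
    qed
    show ?thesis using span_sub_span[OF 1] span_sub_span[OF 2] by blast
  qed
  then have dG: "tv.dim (snd ` L) = tv.dim (\<Union>i\<in>K. GA i)" unfolding fstL by (rule tv.span_eq_dim)
  have sub: "(\<Union>i\<in>K. {fib Y (q i) \<iota> | \<iota>. \<iota> \<in> extensional X}) \<subseteq> tv.span (case_prod r ` L)"
  proof
    fix x assume "x \<in> (\<Union>i\<in>K. {fib Y (q i) \<iota> | \<iota>. \<iota> \<in> extensional X})"
    then obtain i \<iota> where i: "i \<in> K" "\<iota> \<in> extensional X" "x = fib Y (q i) \<iota>" by blast
    have "x = fib Y (\<Sum>g\<in>\<beta> i. tp X Y g (r i g)) \<iota>" using r i by simp
    also have "\<dots> = (\<Sum>g\<in>\<beta> i. tscale (g \<iota>) (r i g))"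
      unfolding fib_sum using fib_tp2[OF XY _ i(2)] r i by (intro sum.cong) auto
    finally have x: "x = (\<Sum>g\<in>\<beta> i. tscale (g \<iota>) (r i g))" .
    have "(\<Sum>g\<in>\<beta> i. tscale (g \<iota>) (r i g)) \<in> tv.span (case_prod r ` L)"
    proof (intro tv.span_sum tv.span_scale tv.span_base)
      fix g assume "g \<in> \<beta> i"
      then have "(i, g) \<in> L" unfolding L_def using i by auto
      then show "r i g \<in> case_prod r ` L" by force
    qed
    then show "x \<in> tv.span (case_prod r ` L)" using x by simp
  qed
  have "tv.dim (\<Union>i\<in>K. {fib Y (q i) \<iota> | \<iota>. \<iota> \<in> extensional X}) \<le> tv.dim (case_prod r ` L)"
    by (rule dim_mono'[OF sub]) (use fL in auto)
  then show ?thesis using tr cL dG by linarith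
qed

lemma fib_nonzero_exists:
  fixes x :: "('b,'a::field) tens"
  assumes "supp_on (X \<union> Y) x" "x \<noteq> 0"
  shows "\<exists>\<kappa>\<in>extensional Y. fib X x \<kappa> \<noteq> 0"
  using fib_zero_imp[OF assms(1)] assms(2) by blast

lemma W2:
  fixes q :: "'i \<Rightarrow> ('b,'a::field) tens" and GA GB :: "'i \<Rightarrow> ('b,'a) tens set"
  assumes XY: "X \<inter> Y = {}" and fK: "finite K" and q0: "(\<Sum>i\<in>K. q i) = 0"
    and hyp: "\<forall>i\<in>K. q i \<noteq> 0 \<and> supp_on (X \<union> Y) (q i) \<and> finite (GA i) \<and> finite (GB i)
       \<and> (\<forall>g\<in>GA i. supp_on X g) \<and> (\<forall>s\<in>GB i. supp_on Y s)
       \<and> (\<forall>\<kappa>\<in>extensional Y. fib X (q i) \<kappa> \<in> tv.span (GA i))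
       \<and> (\<forall>\<iota>\<in>extensional X. fib Y (q i) \<iota> \<in> tv.span (GB i))"
  shows "card K + tv.dim (\<Union>i\<in>K. GA i) + tv.dim (\<Union>i\<in>K. GB i)
           \<le> (\<Sum>i\<in>K. tv.dim (GA i)) + (\<Sum>i\<in>K. tv.dim (GB i))"
proof -
  define FA where "FA i = {fib X (q i) \<kappa> | \<kappa>. \<kappa> \<in> extensional Y}" for i
  have k1: "tv.dim (\<Union>i\<in>K. FA i) + tv.dim (\<Union>i\<in>K. GB i) \<le> (\<Sum>i\<in>K. tv.dim (GB i))"
    unfolding FA_def
  proof (rule ker_bound[of Y X K q GB])
    show "Y \<inter> X = {}" using XY by blast
    show "finite K" by fact
    show "(\<Sum>i\<in>K. q i) = 0" by fact
    show "\<forall>i\<in>K. supp_on (Y \<union> X) (q i) \<and> finite (GB i) \<and> (\<forall>g\<in>GB i. supp_on Y g) \<and>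
        (\<forall>\<kappa>\<in>extensional X. fib Y (q i) \<kappa> \<in> tv.span (GB i))"
      using hyp by (simp add: Un_commute)
  qed
  have exb: "\<forall>i\<in>K. \<exists>B. B \<subseteq> FA i \<and> FA i \<subseteq> tv.span B \<and> finite B \<and> B \<subseteq> tv.span (GA i) \<and> 1 \<le> tv.dim B"
  proof
    fix i assume i: "i \<in> K"
    have sub: "FA i \<subseteq> tv.span (GA i)" and fG: "finite (GA i)" using hyp i unfolding FA_def by auto
    obtain B where B: "B \<subseteq> FA i" "tv.independent B" "FA i \<subseteq> tv.span B" "card B = tv.dim (FA i)" "finite B"
      using basis_fin[OF sub fG] by blast
    obtain \<kappa> where k: "\<kappa> \<in> extensional Y" "fib X (q i) \<kappa> \<noteq> 0"
      using fib_nonzero_exists[of X Y "q i"] hyp i by blast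
    have "fib X (q i) \<kappa> \<in> tv.span B" using B(3) k(1) unfolding FA_def by blast
    then have "1 \<le> tv.dim B" using dim_pos[OF B(5) _ k(2)] by blast
    then show "\<exists>B. B \<subseteq> FA i \<and> FA i \<subseteq> tv.span B \<and> finite B \<and> B \<subseteq> tv.span (GA i) \<and> 1 \<le> tv.dim B"
      using B sub by blast
  qed
  obtain BA where BA: "\<forall>i\<in>K. BA i \<subseteq> FA i \<and> FA i \<subseteq> tv.span (BA i) \<and> finite (BA i) \<and> BA i \<subseteq> tv.span (GA i) \<and> 1 \<le> tv.dim (BA i)"
    using bchoice[OF exb] by (elim exE) (rule that)
  have m: "tv.dim (\<Union>i\<in>K. GA i) + (\<Sum>i\<in>K. tv.dim (BA i)) \<le> tv.dim (\<Union>i\<in>K. BA i) + (\<Sum>i\<in>K. tv.dim (GA i))"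
    by (rule mon_core[OF fK]) (use BA hyp in auto)
  have cK: "card K \<le> (\<Sum>i\<in>K. tv.dim (BA i))"
  proof -
    have "card K = (\<Sum>i\<in>K. (1::nat))" by simp
    also have "\<dots> \<le> (\<Sum>i\<in>K. tv.dim (BA i))" using BA by (intro sum_mono) auto
    finally show ?thesis .
  qed
  have "tv.span (\<Union>i\<in>K. BA i) = tv.span (\<Union>i\<in>K. FA i)"
  proof -
    have 1: "(\<Union>i\<in>K. BA i) \<subseteq> tv.span (\<Union>i\<in>K. FA i)"
      using BA tv.span_superset[of "\<Union>i\<in>K. FA i"] by blast
    have 2: "(\<Union>i\<in>K. FA i) \<subseteq> tv.span (\<Union>i\<in>K. BA i)"
    proof
      fix x assume "x \<in> (\<Union>i\<in>K. FA i)"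
      then obtain i where i: "i \<in> K" "x \<in> FA i" by blast
      then have "x \<in> tv.span (BA i)" using BA by blast
      moreover have "tv.span (BA i) \<subseteq> tv.span (\<Union>i\<in>K. BA i)" using i by (intro tv.span_mono) auto
      ultimately show "x \<in> tv.span (\<Union>i\<in>K. BA i)" by blast
    qed
    show ?thesis using span_sub_span[OF 1] span_sub_span[OF 2] by blast
  qed
  then have "tv.dim (\<Union>i\<in>K. BA i) = tv.dim (\<Union>i\<in>K. FA i)" by (rule tv.span_eq_dim)
  then show ?thesis using k1 m cK by linarith
qed


definition nonsplit :: "('e \<Rightarrow> ('b,'a::field) tens) \<Rightarrow> 'e set \<Rightarrow> bool" where
  "nonsplit w E \<longleftrightarrow> (\<forall>Y. Y \<subseteq> E \<and> Y \<noteq> {} \<and> Y \<noteq> E \<longrightarrow> \<not> (tv.span (w ` Y) \<inter> tv.span (w ` (E - Y)) \<subseteq> {0}))"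

definition indep_parts :: "('e \<Rightarrow> ('b,'a::field) tens) \<Rightarrow> 'e set set \<Rightarrow> bool" where
  "indep_parts w P \<longleftrightarrow> (\<forall>f. (\<forall>C\<in>P. f C \<in> tv.span (w ` C)) \<and> (\<Sum>C\<in>P. f C) = 0 \<longrightarrow> (\<forall>C\<in>P. f C = 0))"

definition part :: "'e set \<Rightarrow> 'e set set \<Rightarrow> bool" where
  "part E P \<longleftrightarrow> \<Union>P = E \<and> (\<forall>C\<in>P. C \<noteq> {}) \<and> (\<forall>C\<in>P. \<forall>D\<in>P. C \<noteq> D \<longrightarrow> C \<inter> D = {})"

lemma decomp:
  fixes w :: "'e \<Rightarrow> ('b,'a::field) tens"
  shows "finite E \<Longrightarrow> \<exists>P. part E P \<and> finite P \<and> (\<forall>C\<in>P. nonsplit w C) \<and> indep_parts w P"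
proof (induction "card E" arbitrary: E rule: less_induct)
  case less
  show ?case
  proof (cases "nonsplit w E")
    case True
    show ?thesis
    proof (cases "E = {}")
      case True
      then show ?thesis by (intro exI[of _ "{}"]) (auto simp: part_def indep_parts_def)
    next
      case False
      then show ?thesis using \<open>nonsplit w E\<close>
        by (intro exI[of _ "{E}"]) (auto simp: part_def indep_parts_def)
    qed
  next
    case False
    then obtain Y where Y: "Y \<subseteq> E" "Y \<noteq> {}" "Y \<noteq> E" "tv.span (w ` Y) \<inter> tv.span (w ` (E - Y)) \<subseteq> {0}"
      unfolding nonsplit_def by blast
    have fY: "finite Y" "finite (E - Y)" using less.prems Y(1) finite_subset by auto
    have "Y \<subset> E" using Y(1,3) by blast
    then have cY: "card Y < card E" using less.prems by (rule psubset_card_mono[rotated])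
    have "E - Y \<subset> E" using Y(1,2) by blast
    then have cZ: "card (E - Y) < card E" using less.prems by (rule psubset_card_mono[rotated])
    obtain P1 where P1: "part Y P1" "finite P1" "\<forall>C\<in>P1. nonsplit w C" "indep_parts w P1"
      using less.hyps[OF cY fY(1)] by blast
    obtain P2 where P2: "part (E - Y) P2" "finite P2" "\<forall>C\<in>P2. nonsplit w C" "indep_parts w P2"
      using less.hyps[OF cZ fY(2)] by blast
    have disj: "P1 \<inter> P2 = {}"
    proof (rule ccontr)
      assume "P1 \<inter> P2 \<noteq> {}"
      then obtain C where C: "C \<in> P1" "C \<in> P2" by blast
      then have "C \<noteq> {}" "C \<subseteq> Y" "C \<subseteq> E - Y" using P1(1) P2(1) unfolding part_def by auto
      then show False by blast
    qed
    have part: "part E (P1 \<union> P2)"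
    proof -
      have "\<Union>(P1 \<union> P2) = E" using P1(1) P2(1) Y(1) unfolding part_def by auto
      moreover have "\<forall>C\<in>P1 \<union> P2. C \<noteq> {}" using P1(1) P2(1) unfolding part_def by auto
      moreover have "\<forall>C\<in>P1 \<union> P2. \<forall>D\<in>P1 \<union> P2. C \<noteq> D \<longrightarrow> C \<inter> D = {}"
      proof (intro ballI impI)
        fix C D assume C: "C \<in> P1 \<union> P2" and D: "D \<in> P1 \<union> P2" and CD: "C \<noteq> D"
        show "C \<inter> D = {}"
        proof (cases "C \<in> P1")
          case True
          show ?thesis
          proof (cases "D \<in> P1")
            case True then show ?thesis using \<open>C \<in> P1\<close> CD P1(1) unfolding part_def by blast
          next
            case False then have "D \<in> P2" using D by blast
            then have "D \<subseteq> E - Y" "C \<subseteq> Y" using \<open>C \<in> P1\<close> P1(1) P2(1) unfolding part_def by auto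
            then show ?thesis by blast
          qed
        next
          case False then have C2: "C \<in> P2" using C by blast
          show ?thesis
          proof (cases "D \<in> P2")
            case True then show ?thesis using C2 CD P2(1) unfolding part_def by blast
          next
            case False then have "D \<in> P1" using D by blast
            then have "D \<subseteq> Y" "C \<subseteq> E - Y" using C2 P1(1) P2(1) unfolding part_def by auto
            then show ?thesis by blast
          qed
        qed
      qed
      ultimately show ?thesis unfolding part_def by blast
    qed
    have ind: "indep_parts w (P1 \<union> P2)"
      unfolding indep_parts_def
    proof (intro allI impI)
      fix f assume h: "(\<forall>C\<in>P1 \<union> P2. f C \<in> tv.span (w ` C)) \<and> (\<Sum>C\<in>P1 \<union> P2. f C) = 0"
      have s: "(\<Sum>C\<in>P1. f C) + (\<Sum>C\<in>P2. f C) = 0"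
        using h sum.union_disjoint[OF P1(2) P2(2) disj, of f] by simp
      have a1: "(\<Sum>C\<in>P1. f C) \<in> tv.span (w ` Y)"
      proof (intro tv.span_sum)
        fix C assume C: "C \<in> P1"
        then have "f C \<in> tv.span (w ` C)" using h by blast
        moreover have "tv.span (w ` C) \<subseteq> tv.span (w ` Y)"
          using C P1(1) unfolding part_def by (intro tv.span_mono image_mono) blast
        ultimately show "f C \<in> tv.span (w ` Y)" by blast
      qed
      have a2: "(\<Sum>C\<in>P2. f C) \<in> tv.span (w ` (E - Y))"
      proof (intro tv.span_sum)
        fix C assume C: "C \<in> P2"
        then have "f C \<in> tv.span (w ` C)" using h by blast
        moreover have "tv.span (w ` C) \<subseteq> tv.span (w ` (E - Y))"
          using C P2(1) unfolding part_def by (intro tv.span_mono image_mono) blast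
        ultimately show "f C \<in> tv.span (w ` (E - Y))" by blast
      qed
      have "(\<Sum>C\<in>P1. f C) = - (\<Sum>C\<in>P2. f C)" using s by (simp add: eq_neg_iff_add_eq_0)
      then have "(\<Sum>C\<in>P1. f C) \<in> tv.span (w ` (E - Y))" using a2 tv.span_neg by metis
      then have z1: "(\<Sum>C\<in>P1. f C) = 0" using a1 Y(4) by auto
      then have z2: "(\<Sum>C\<in>P2. f C) = 0" using s by simp
      have "\<forall>C\<in>P1. f C = 0" using P1(4)[unfolded indep_parts_def, rule_format, of f] h z1 by auto
      moreover have "\<forall>C\<in>P2. f C = 0" using P2(4)[unfolded indep_parts_def, rule_format, of f] h z2 by auto
      ultimately show "\<forall>C\<in>P1 \<union> P2. f C = 0" by blast
    qed
    show ?thesis using part ind P1 P2 by (intro exI[of _ "P1 \<union> P2"]) auto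
  qed
qed


lemma dim_single: "x \<noteq> 0 \<Longrightarrow> tv.dim {x :: 'c \<Rightarrow> 'a::field} = 1"
proof -
  assume x: "x \<noteq> 0"
  have "tv.dim {x} \<le> card {x}" by (rule tv.dim_le_card') simp
  moreover have "1 \<le> tv.dim {x}" by (rule dim_pos[of _ x]) (use x tv.span_base in auto)
  ultimately show ?thesis by simp
qed

lemma dim_empty_tv[simp]: "tv.dim ({} :: ('c \<Rightarrow> 'a::field) set) = 0"
  using tv.dim_le_card'[of "{} :: ('c \<Rightarrow> 'a::field) set"] by simp

lemma dsum:
  fixes w :: "'e \<Rightarrow> ('b,'a::field) tens"
  shows "finite P \<Longrightarrow> (\<forall>C\<in>P. finite C) \<Longrightarrow> indep_parts w P \<Longrightarrow> tv.dim (w ` \<Union>P) = (\<Sum>C\<in>P. tv.dim (w ` C))"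
proof (induction P rule: finite_induct)
  case empty
  then show ?case by simp
next
  case (insert C P)
  have indP: "indep_parts w P"
    unfolding indep_parts_def
  proof (intro allI impI)
    fix f assume h: "(\<forall>C\<in>P. f C \<in> tv.span (w ` C)) \<and> (\<Sum>C\<in>P. f C) = 0"
    define f' where "f' = f(C := 0)"
    have "\<forall>C'\<in>insert C P. f' C' \<in> tv.span (w ` C')" using h tv.span_zero unfolding f'_def by auto
    moreover have "(\<Sum>C'\<in>insert C P. f' C') = 0"
    proof -
      have "(\<Sum>C'\<in>P. f' C') = (\<Sum>C'\<in>P. f C')" unfolding f'_def using insert.hyps(2) by (intro sum.cong) auto
      then show ?thesis using insert.hyps h unfolding f'_def by simp
    qed
    ultimately have "\<forall>C'\<in>insert C P. f' C' = 0"
      using insert.prems(2)[unfolded indep_parts_def, rule_format, of f'] by blast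
    then show "\<forall>C\<in>P. f C = 0" unfolding f'_def using insert.hyps(2) by (metis fun_upd_other insertCI)
  qed
  have fin: "\<forall>C\<in>P. finite C" using insert.prems(1) by auto
  have IH: "tv.dim (w ` \<Union>P) = (\<Sum>C\<in>P. tv.dim (w ` C))" using insert.IH[OF fin indP] .
  have inter: "tv.span (w ` C) \<inter> tv.span (w ` \<Union>P) \<subseteq> {0}"
  proof
    fix x assume x: "x \<in> tv.span (w ` C) \<inter> tv.span (w ` \<Union>P)"
    have "w ` \<Union>P = (\<Union>C'\<in>P. w ` C')" by auto
    then have "x \<in> tv.span (\<Union>C'\<in>P. w ` C')" using x by simp
    then obtain f where f: "\<forall>C'\<in>P. f C' \<in> tv.span (w ` C')" "x = (\<Sum>C'\<in>P. f C')"
      using span_Union_sum[OF insert.hyps(1)] by blast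
    define f' where "f' = f(C := - x)"
    have "\<forall>C'\<in>insert C P. f' C' \<in> tv.span (w ` C')"
      using f x tv.span_neg unfolding f'_def by auto
    moreover have "(\<Sum>C'\<in>insert C P. f' C') = 0"
    proof -
      have "(\<Sum>C'\<in>P. f' C') = (\<Sum>C'\<in>P. f C')" unfolding f'_def using insert.hyps(2) by (intro sum.cong) auto
      then show ?thesis using insert.hyps f unfolding f'_def by simp
    qed
    ultimately have "f' C = 0"
      using insert.prems(2)[unfolded indep_parts_def, rule_format, of f'] by blast
    then show "x \<in> {0}" unfolding f'_def by simp
  qed
  have "w ` \<Union>(insert C P) = w ` C \<union> w ` \<Union>P" by auto
  then have "tv.dim (w ` \<Union>(insert C P)) = tv.dim (w ` C) + tv.dim (w ` \<Union>P)"
    using dim_direct[OF _ _ inter] insert.prems(1) insert.hyps(1) by simp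
  then show ?case using IH insert.hyps by simp
qed

lemma fib_span_tp:
  fixes g s :: "'e \<Rightarrow> ('b,'a::field) tens"
  assumes XY: "X \<inter> Y = {}" "\<forall>c\<in>C. supp_on X (g c)"
    "x \<in> tv.span ((\<lambda>c. tp X Y (g c) (s c)) ` C)" "\<kappa> \<in> extensional Y"
  shows "fib X x \<kappa> \<in> tv.span (g ` C)"
proof -
  have "fib X x \<kappa> \<in> tv.span ((\<lambda>y. fib X y \<kappa>) ` (\<lambda>c. tp X Y (g c) (s c)) ` C)"
    by (rule fib_span[OF assms(3)])
  moreover have "(\<lambda>y. fib X y \<kappa>) ` (\<lambda>c. tp X Y (g c) (s c)) ` C \<subseteq> tv.span (g ` C)"
  proof
    fix y assume "y \<in> (\<lambda>y. fib X y \<kappa>) ` (\<lambda>c. tp X Y (g c) (s c)) ` C"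
    then obtain c where c: "c \<in> C" "y = fib X (tp X Y (g c) (s c)) \<kappa>" by blast
    then have "y = tscale (s c \<kappa>) (g c)" using fib_tp[OF XY(1) _ assms(4), of "g c" "s c"] assms(2) by simp
    then show "y \<in> tv.span (g ` C)" using c by (auto intro: tv.span_scale tv.span_base)
  qed
  ultimately show ?thesis using span_sub_span by blast
qed

lemma fib_span_tp2:
  fixes g s :: "'e \<Rightarrow> ('b,'a::field) tens"
  assumes XY: "X \<inter> Y = {}" "\<forall>c\<in>C. supp_on Y (s c)"
    "x \<in> tv.span ((\<lambda>c. tp X Y (g c) (s c)) ` C)" "\<iota> \<in> extensional X"
  shows "fib Y x \<iota> \<in> tv.span (s ` C)"
proof -
  have e: "(\<lambda>c. tp X Y (g c) (s c)) = (\<lambda>c. tp Y X (s c) (g c))" by (simp add: tp_sym)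
  have x: "x \<in> tv.span ((\<lambda>c. tp Y X (s c) (g c)) ` C)" using assms(3) unfolding e .
  show ?thesis
    by (rule fib_span_tp[of Y X C s _ g, OF _ _ x]) (use assms in \<open>auto simp: Int_commute\<close>)
qed


lemma ST2:
  fixes g s :: "'e \<Rightarrow> ('b,'a::field) tens"
  assumes XY: "X \<inter> Y = {}"
  shows "finite E \<Longrightarrow> E \<noteq> {} \<Longrightarrow> \<forall>e\<in>E. g e \<noteq> 0 \<and> s e \<noteq> 0 \<and> supp_on X (g e) \<and> supp_on Y (s e)
    \<Longrightarrow> nonsplit (\<lambda>e. tp X Y (g e) (s e)) E
    \<Longrightarrow> tv.dim (g ` E) + tv.dim (s ` E) \<le> tv.dim ((\<lambda>e. tp X Y (g e) (s e)) ` E) + 1"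
proof (induction "card E" arbitrary: E rule: less_induct)
  case less
  define w where "w = (\<lambda>e. tp X Y (g e) (s e))"
  note fE = less.prems(1) and hyp = less.prems(3)
  have ns: "nonsplit w E" using less.prems(4) unfolding w_def .
  obtain e where e: "e \<in> E" using less.prems(2) by blast
  have wne: "\<forall>e\<in>E. w e \<noteq> 0" using hyp tp_nonzero[OF XY] unfolding w_def by blast
  have suppw: "\<forall>e\<in>E. supp_on (X \<union> Y) (w e)" unfolding w_def by (simp add: supp_on_tp)
  show ?case
  proof (cases "E = {e}")
    case True
    then show ?thesis using hyp wne e unfolding w_def[symmetric] by (simp add: dim_single)
  next
    case False
    define E' where "E' = E - {e}"
    have E'ne: "E' \<noteq> {}" using False e unfolding E'_def by blast
    have fE': "finite E'" using fE unfolding E'_def by simp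
    have EE': "E = insert e E'" using e unfolding E'_def by blast
    have eE': "e \<notin> E'" unfolding E'_def by simp
    have we: "w e \<in> tv.span (w ` E')"
    proof (rule ccontr)
      assume nin: "w e \<notin> tv.span (w ` E')"
      have "tv.span (w ` {e}) \<inter> tv.span (w ` (E - {e})) \<subseteq> {0}"
      proof
        fix x assume x: "x \<in> tv.span (w ` {e}) \<inter> tv.span (w ` (E - {e}))"
        then obtain k where k: "x = tscale k (w e)" using tv.span_singleton[of "w e"] by auto
        show "x \<in> {0}"
        proof (cases "k = 0")
          case True then show ?thesis using k by simp
        next
          case False
          have "w e = tscale (inverse k) x" using k False by (simp add: tv.scale_scale)
          moreover have "tscale (inverse k) x \<in> tv.span (w ` E')" using x unfolding E'_def by (auto intro: tv.span_scale)
          ultimately show ?thesis using nin by simp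
        qed
      qed
      moreover have "{e} \<subseteq> E" "{e} \<noteq> {}" "{e} \<noteq> E" using e False by auto
      ultimately show False using ns unfolding nonsplit_def by blast
    qed
    obtain P where P: "part E' P" "finite P" "\<forall>C\<in>P. nonsplit w C" "indep_parts w P"
      using decomp[OF fE'] by blast
    have UP: "\<Union>P = E'" using P(1) unfolding part_def by blast
    have CsubE': "\<And>C. C \<in> P \<Longrightarrow> C \<subseteq> E'" using UP by blast
    have Cne: "\<And>C. C \<in> P \<Longrightarrow> C \<noteq> {}" using P(1) unfolding part_def by blast
    have Cdisj: "\<And>C D. C \<in> P \<Longrightarrow> D \<in> P \<Longrightarrow> C \<noteq> D \<Longrightarrow> C \<inter> D = {}" using P(1) unfolding part_def by blast
    have finC: "\<forall>C\<in>P. finite C" using CsubE' fE' finite_subset by blast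
    have wE': "w ` E' = (\<Union>C\<in>P. w ` C)" using UP by auto
    obtain p where p: "\<forall>C\<in>P. p C \<in> tv.span (w ` C)" "w e = (\<Sum>C\<in>P. p C)"
      using span_Union_sum[OF P(2), where S="\<lambda>C. w ` C" and x="w e"] we unfolding wE' by blast
    have pnz: "\<forall>C\<in>P. p C \<noteq> 0"
    proof (intro ballI notI)
      fix C assume C: "C \<in> P" and p0: "p C = 0"
      have CE: "C \<subseteq> E" "C \<noteq> {}" "C \<noteq> E" using CsubE'[OF C] Cne[OF C] EE' eE' by auto
      have "tv.span (w ` C) \<inter> tv.span (w ` (E - C)) \<subseteq> {0}"
      proof
        fix x assume x: "x \<in> tv.span (w ` C) \<inter> tv.span (w ` (E - C))"
        have EC: "E - C = insert e (\<Union>(P - {C}))"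
        proof
          show "E - C \<subseteq> insert e (\<Union>(P - {C}))" using EE' UP by blast
          show "insert e (\<Union>(P - {C})) \<subseteq> E - C"
          proof
            fix y assume y: "y \<in> insert e (\<Union>(P - {C}))"
            show "y \<in> E - C"
            proof (cases "y = e")
              case True then show ?thesis using e CsubE'[OF C] eE' by auto
            next
              case False
              then obtain D where D: "D \<in> P" "D \<noteq> C" "y \<in> D" using y by blast
              then have "y \<notin> C" using Cdisj[OF C D(1)] by blast
              then show ?thesis using D UP EE' by blast
            qed
          qed
        qed
        have "x \<in> tv.span (insert (w e) (w ` \<Union>(P - {C})))" using x EC by simp
        then obtain k where k: "x - tscale k (w e) \<in> tv.span (w ` \<Union>(P - {C}))"
          using tv.span_breakdown_eq by blast
        have "w ` \<Union>(P - {C}) = (\<Union>C'\<in>P - {C}. w ` C')" by auto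
        then obtain f where f: "\<forall>C'\<in>P - {C}. f C' \<in> tv.span (w ` C')" "x - tscale k (w e) = (\<Sum>C'\<in>P - {C}. f C')"
          using span_Union_sum[where I="P - {C}" and S="\<lambda>C'. w ` C'" and x="x - tscale k (w e)"] k P(2) by auto
        have we2: "w e = (\<Sum>C'\<in>P - {C}. p C')"
          using p(2) p0 sum.remove[OF P(2) C, of p] by simp
        define F where "F = (\<lambda>C'. if C' = C then - x else f C' + tscale k (p C'))"
        have Fs: "\<forall>C'\<in>P. F C' \<in> tv.span (w ` C')"
        proof
          fix C' assume C': "C' \<in> P"
          show "F C' \<in> tv.span (w ` C')"
          proof (cases "C' = C")
            case True then show ?thesis using x tv.span_neg unfolding F_def by auto
          next
            case False
            then show ?thesis using f(1) p(1) C' unfolding F_def by (auto intro!: tv.span_add tv.span_scale)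
          qed
        qed
        have "(\<Sum>C'\<in>P. F C') = F C + (\<Sum>C'\<in>P - {C}. F C')" using sum.remove[OF P(2) C] by blast
        also have "(\<Sum>C'\<in>P - {C}. F C') = (\<Sum>C'\<in>P - {C}. f C' + tscale k (p C'))"
          unfolding F_def by (intro sum.cong) auto
        also have "\<dots> = (\<Sum>C'\<in>P - {C}. f C') + tscale k (\<Sum>C'\<in>P - {C}. p C')"
          by (simp add: sum.distrib tv.scale_sum_right)
        also have "\<dots> = x" using f(2) we2 by (simp add: algebra_simps)
        finally have "(\<Sum>C'\<in>P. F C') = F C + x" .
        moreover have "F C = - x" unfolding F_def by simp
        ultimately have "(\<Sum>C'\<in>P. F C') = 0" by simp
        then have "F C = 0" using P(4)[unfolded indep_parts_def, rule_format, of F] Fs C by blast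
        then show "x \<in> {0}" unfolding F_def by simp
      qed
      then show False using ns CE unfolding nonsplit_def by blast
    qed
    have IH: "\<forall>C\<in>P. tv.dim (g ` C) + tv.dim (s ` C) \<le> tv.dim (w ` C) + 1"
    proof
      fix C assume C: "C \<in> P"
      have "C \<subset> E" using CsubE'[OF C] EE' eE' by blast
      then have cC: "card C < card E" using fE by (rule psubset_card_mono[rotated])
      have h1: "finite C" using finC C by blast
      have h2: "C \<noteq> {}" using Cne[OF C] .
      have "C \<subseteq> E" using CsubE'[OF C] EE' by blast
      then have h3: "\<forall>e\<in>C. g e \<noteq> 0 \<and> s e \<noteq> 0 \<and> supp_on X (g e) \<and> supp_on Y (s e)" using hyp by blast
      have h4: "nonsplit (\<lambda>e. tp X Y (g e) (s e)) C" using P(3) C unfolding w_def by blast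
      have "tv.dim (g ` C) + tv.dim (s ` C) \<le> tv.dim ((\<lambda>e. tp X Y (g e) (s e)) ` C) + 1"
        by (rule less.hyps[OF cC h1 h2 h3 h4])
      then show "tv.dim (g ` C) + tv.dim (s ` C) \<le> tv.dim (w ` C) + 1" unfolding w_def .
    qed
    have ds: "tv.dim (w ` E') = (\<Sum>C\<in>P. tv.dim (w ` C))"
      using dsum[OF P(2) finC P(4)] UP by simp
    define K where "K = insert None (Some ` P)"
    define q where "q = (\<lambda>oo. case oo of None \<Rightarrow> - w e | Some C \<Rightarrow> p C)"
    define GA where "GA = (\<lambda>oo. case oo of None \<Rightarrow> {g e} | Some C \<Rightarrow> g ` C)"
    define GB where "GB = (\<lambda>oo. case oo of None \<Rightarrow> {s e} | Some C \<Rightarrow> s ` C)"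
    have fK: "finite K" unfolding K_def using P(2) by simp
    have NK: "None \<notin> Some ` P" by auto
    have sumK: "\<And>h. (\<Sum>oo\<in>K. h oo) = h None + (\<Sum>C\<in>P. h (Some C))"
      unfolding K_def using P(2) NK by (simp add: sum.reindex)
    have q0: "(\<Sum>oo\<in>K. q oo) = 0" unfolding sumK q_def using p(2) by simp
    have he: "g e \<noteq> 0 \<and> s e \<noteq> 0 \<and> supp_on X (g e) \<and> supp_on Y (s e)" using hyp e by blast
    have hC: "\<forall>C\<in>P. \<forall>c\<in>C. g c \<noteq> 0 \<and> s c \<noteq> 0 \<and> supp_on X (g c) \<and> supp_on Y (s c)"
      using hyp CsubE' EE' by blast
    have hypK: "\<forall>oo\<in>K. q oo \<noteq> 0 \<and> supp_on (X \<union> Y) (q oo) \<and> finite (GA oo) \<and> finite (GB oo)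
       \<and> (\<forall>g\<in>GA oo. supp_on X g) \<and> (\<forall>s\<in>GB oo. supp_on Y s)
       \<and> (\<forall>\<kappa>\<in>extensional Y. fib X (q oo) \<kappa> \<in> tv.span (GA oo))
       \<and> (\<forall>\<iota>\<in>extensional X. fib Y (q oo) \<iota> \<in> tv.span (GB oo))"
    proof
      fix oo assume oo: "oo \<in> K"
      show "q oo \<noteq> 0 \<and> supp_on (X \<union> Y) (q oo) \<and> finite (GA oo) \<and> finite (GB oo)
       \<and> (\<forall>g\<in>GA oo. supp_on X g) \<and> (\<forall>s\<in>GB oo. supp_on Y s)
       \<and> (\<forall>\<kappa>\<in>extensional Y. fib X (q oo) \<kappa> \<in> tv.span (GA oo))
       \<and> (\<forall>\<iota>\<in>extensional X. fib Y (q oo) \<iota> \<in> tv.span (GB oo))"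
      proof (cases oo)
        case None
        have q: "q oo = - w e" unfolding q_def None by simp
        have "w e \<noteq> 0" using wne e by blast
        moreover have "supp_on (X \<union> Y) (- w e)" using suppw e by (simp add: supp_on_def)
        moreover have "\<forall>\<kappa>\<in>extensional Y. fib X (- w e) \<kappa> \<in> tv.span {g e}"
        proof
          fix \<kappa> :: "nat \<Rightarrow> 'b" assume k: "\<kappa> \<in> extensional Y"
          have "fib X (- w e) \<kappa> = - tscale (s e \<kappa>) (g e)"
            unfolding fib_uminus w_def using fib_tp[OF XY _ k, of "g e" "s e"] he by simp
          moreover have "g e \<in> tv.span {g e}" by (rule tv.span_base) simp
          ultimately show "fib X (- w e) \<kappa> \<in> tv.span {g e}"
            using tv.span_neg[OF tv.span_scale[of "g e" "{g e}" "s e \<kappa>"]] by simp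
        qed
        moreover have "\<forall>\<iota>\<in>extensional X. fib Y (- w e) \<iota> \<in> tv.span {s e}"
        proof
          fix \<iota> :: "nat \<Rightarrow> 'b" assume i: "\<iota> \<in> extensional X"
          have "fib Y (- w e) \<iota> = - tscale (g e \<iota>) (s e)"
            unfolding fib_uminus w_def using fib_tp2[OF XY _ i, of "s e" "g e"] he by simp
          moreover have "s e \<in> tv.span {s e}" by (rule tv.span_base) simp
          ultimately show "fib Y (- w e) \<iota> \<in> tv.span {s e}"
            using tv.span_neg[OF tv.span_scale[of "s e" "{s e}" "g e \<iota>"]] by simp
        qed
        ultimately show ?thesis using q he unfolding GA_def GB_def None by simp
      next
        case (Some C)
        then have C: "C \<in> P" using oo unfolding K_def by auto
        have q: "q oo = p C" unfolding q_def Some by simp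
        have pC: "p C \<in> tv.span ((\<lambda>e. tp X Y (g e) (s e)) ` C)" using p(1) C unfolding w_def by blast
        have "supp_on (X \<union> Y) (p C)"
          by (rule supp_on_span[OF _ pC]) (auto simp: supp_on_tp)
        moreover have "\<forall>\<kappa>\<in>extensional Y. fib X (p C) \<kappa> \<in> tv.span (g ` C)"
          using fib_span_tp[OF XY _ pC] hC C by blast
        moreover have "\<forall>\<iota>\<in>extensional X. fib Y (p C) \<iota> \<in> tv.span (s ` C)"
          using fib_span_tp2[OF XY _ pC] hC C by blast
        ultimately show ?thesis using q pnz C finC hC unfolding GA_def GB_def Some by auto
      qed
    qed
    have W: "card K + tv.dim (\<Union>oo\<in>K. GA oo) + tv.dim (\<Union>oo\<in>K. GB oo)
           \<le> (\<Sum>oo\<in>K. tv.dim (GA oo)) + (\<Sum>oo\<in>K. tv.dim (GB oo))"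
      by (rule W2[OF XY fK q0 hypK])
    have cK: "card K = card P + 1" unfolding K_def using P(2) NK by (simp add: card_image)
    have uA: "(\<Union>oo\<in>K. GA oo) = g ` E" unfolding K_def GA_def using EE' UP by auto
    have uB: "(\<Union>oo\<in>K. GB oo) = s ` E" unfolding K_def GB_def using EE' UP by auto
    have sA: "(\<Sum>oo\<in>K. tv.dim (GA oo)) = 1 + (\<Sum>C\<in>P. tv.dim (g ` C))"
      unfolding sumK GA_def using he by (simp add: dim_single)
    have sB: "(\<Sum>oo\<in>K. tv.dim (GB oo)) = 1 + (\<Sum>C\<in>P. tv.dim (s ` C))"
      unfolding sumK GB_def using he by (simp add: dim_single)
    have "(\<Sum>C\<in>P. tv.dim (g ` C)) + (\<Sum>C\<in>P. tv.dim (s ` C)) = (\<Sum>C\<in>P. tv.dim (g ` C) + tv.dim (s ` C))"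
      by (simp add: sum.distrib)
    also have "\<dots> \<le> (\<Sum>C\<in>P. tv.dim (w ` C) + 1)" using IH by (intro sum_mono) auto
    also have "\<dots> = (\<Sum>C\<in>P. tv.dim (w ` C)) + (\<Sum>C\<in>P. (1::nat))" by (rule sum.distrib)
    also have "\<dots> = tv.dim (w ` E') + card P" using ds by simp
    finally have 1: "(\<Sum>C\<in>P. tv.dim (g ` C)) + (\<Sum>C\<in>P. tv.dim (s ` C)) \<le> tv.dim (w ` E') + card P" .
    have "w ` E' \<subseteq> w ` E" using EE' by blast
    then have "w ` E' \<subseteq> tv.span (w ` E)" using tv.span_superset[of "w ` E"] by (rule subset_trans)
    then have 2: "tv.dim (w ` E') \<le> tv.dim (w ` E)" by (rule dim_mono') (use fE in auto)
    have W': "card P + 1 + tv.dim (g ` E) + tv.dim (s ` E) \<le> (1 + (\<Sum>C\<in>P. tv.dim (g ` C))) + (1 + (\<Sum>C\<in>P. tv.dim (s ` C)))"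
      using W unfolding cK uA uB sA sB .
    have "tv.dim (g ` E) + tv.dim (s ` E) \<le> tv.dim (w ` E) + 1"
      using W' 1 2 by linarith
    then show ?thesis unfolding w_def .
  qed
qed


lemma rest_nonsplit:
  fixes g s :: "'e \<Rightarrow> ('b,'a::field) tens"
  assumes XY: "X \<inter> Y = {}" and h: "\<forall>e\<in>E. supp_on X (g e) \<and> supp_on Y (s e)"
    and ns: "nonsplit (\<lambda>e. tp X Y (g e) (s e)) E"
  shows "nonsplit s E"
  unfolding nonsplit_def
proof (intro allI impI notI)
  fix Y0 assume Y0: "Y0 \<subseteq> E \<and> Y0 \<noteq> {} \<and> Y0 \<noteq> E"
    and sp: "tv.span (s ` Y0) \<inter> tv.span (s ` (E - Y0)) \<subseteq> {0}"
  define w where "w = (\<lambda>e. tp X Y (g e) (s e))"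
  have "tv.span (w ` Y0) \<inter> tv.span (w ` (E - Y0)) \<subseteq> {0}"
  proof
    fix x assume x: "x \<in> tv.span (w ` Y0) \<inter> tv.span (w ` (E - Y0))"
    have x1: "x \<in> tv.span ((\<lambda>e. tp X Y (g e) (s e)) ` Y0)" using x unfolding w_def by blast
    have x2: "x \<in> tv.span ((\<lambda>e. tp X Y (g e) (s e)) ` (E - Y0))" using x unfolding w_def by blast
    have h1: "\<forall>c\<in>Y0. supp_on Y (s c)" using h Y0 by blast
    have h2: "\<forall>c\<in>E - Y0. supp_on Y (s c)" using h by blast
    have "supp_on (X \<union> Y) x" by (rule supp_on_span[OF _ x1]) (auto simp: supp_on_tp)
    then have sx: "supp_on (Y \<union> X) x" by (simp add: Un_commute)
    have "x = 0"
    proof (rule fib_zero_imp[OF sx])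
      fix \<iota> :: "nat \<Rightarrow> 'b" assume i: "\<iota> \<in> extensional X"
      have "fib Y x \<iota> \<in> tv.span (s ` Y0)" by (rule fib_span_tp2[OF XY h1 x1 i])
      moreover have "fib Y x \<iota> \<in> tv.span (s ` (E - Y0))" by (rule fib_span_tp2[OF XY h2 x2 i])
      ultimately show "fib Y x \<iota> = 0" using sp by blast
    qed
    then show "x \<in> {0}" by simp
  qed
  then show False using ns Y0 unfolding nonsplit_def w_def by blast
qed

lemma partition_on_remove:
  assumes "partition_on M P" "J \<in> P"
  shows "partition_on (M - J) (P - {J})"
proof (rule partition_onI)
  have U: "\<Union>P = M" and D: "disjoint P" and E: "{} \<notin> P" using assms(1) unfolding partition_on_def by auto
  show "\<Union>(P - {J}) = M - J"
  proof
    show "\<Union>(P - {J}) \<subseteq> M - J"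
    proof
      fix x assume "x \<in> \<Union>(P - {J})"
      then obtain K where K: "K \<in> P" "K \<noteq> J" "x \<in> K" by blast
      then have "K \<inter> J = {}" using D assms(2) unfolding disjoint_def by blast
      then show "x \<in> M - J" using K U by blast
    qed
    show "M - J \<subseteq> \<Union>(P - {J})" using U by blast
  qed
  show "\<And>p q. p \<in> P - {J} \<Longrightarrow> q \<in> P - {J} \<Longrightarrow> p \<noteq> q \<Longrightarrow> disjnt p q"
    using D unfolding disjoint_def disjnt_def by blast
  show "{} \<notin> P - {J}" using E by blast
qed

lemma ST:
  fixes z :: "'e \<Rightarrow> nat \<Rightarrow> 'b \<Rightarrow> 'a::field"
  assumes fE: "finite E" and Ene: "E \<noteq> {}"
  shows "finite M \<Longrightarrow> partition_on M P \<Longrightarrow> \<forall>e\<in>E. ptensor M (z e) \<noteq> 0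
    \<Longrightarrow> nonsplit (\<lambda>e. ptensor M (z e)) E
    \<Longrightarrow> (\<Sum>J\<in>P. int (tv.dim ((\<lambda>e. ptensor J (z e)) ` E)) - 1) + 1 \<le> int (tv.dim ((\<lambda>e. ptensor M (z e)) ` E))"
proof (induction "card P" arbitrary: M P rule: less_induct)
  case less
  have fP: "finite P" using less.prems(1,2) unfolding partition_on_def
    by (metis Sup_upper finite_UnionD finite_subset)
  obtain e where e: "e \<in> E" using Ene by blast
  show ?case
  proof (cases "P = {}")
    case True
    have "ptensor M (z e) \<noteq> 0" using less.prems(3) e by blast
    moreover have "ptensor M (z e) \<in> tv.span ((\<lambda>e. ptensor M (z e)) ` E)" using e by (intro tv.span_base) auto
    ultimately have "1 \<le> tv.dim ((\<lambda>e. ptensor M (z e)) ` E)" using dim_pos fE by blast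
    then show ?thesis using True by simp
  next
    case False
    then obtain J where J: "J \<in> P" by blast
    define M' where "M' = M - J"
    have JM: "J \<subseteq> M" using less.prems(2) J unfolding partition_on_def by blast
    have XY: "J \<inter> M' = {}" unfolding M'_def by blast
    have pM': "partition_on M' (P - {J})" unfolding M'_def by (rule partition_on_remove[OF less.prems(2) J])
    have cP: "card (P - {J}) < card P" using fP J by (rule card_Diff1_less)
    have fM': "finite M'" using less.prems(1) unfolding M'_def by simp
    have split: "\<And>e. ptensor M (z e) = tp J M' (ptensor J (z e)) (ptensor M' (z e))"
      unfolding M'_def by (rule ptensor_split[OF less.prems(1) JM])
    have eq: "(\<lambda>e. ptensor M (z e)) = (\<lambda>e. tp J M' (ptensor J (z e)) (ptensor M' (z e)))"
      using split by (rule ext)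
    have nz: "\<forall>e\<in>E. ptensor J (z e) \<noteq> 0 \<and> ptensor M' (z e) \<noteq> 0 \<and> supp_on J (ptensor J (z e)) \<and> supp_on M' (ptensor M' (z e))"
      using less.prems(3) split tp_nonzeroD supp_on_ptensor by metis
    have ns: "nonsplit (\<lambda>e. tp J M' (ptensor J (z e)) (ptensor M' (z e))) E"
      using less.prems(4) unfolding eq .
    have st2: "tv.dim ((\<lambda>e. ptensor J (z e)) ` E) + tv.dim ((\<lambda>e. ptensor M' (z e)) ` E)
        \<le> tv.dim ((\<lambda>e. tp J M' (ptensor J (z e)) (ptensor M' (z e))) ` E) + 1"
      by (rule ST2[OF XY fE Ene nz ns])
    have nsr: "nonsplit (\<lambda>e. ptensor M' (z e)) E"
      by (rule rest_nonsplit[OF XY _ ns]) (use nz in blast)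
    have nz': "\<forall>e\<in>E. ptensor M' (z e) \<noteq> 0" using nz by blast
    have IH: "(\<Sum>J\<in>P - {J}. int (tv.dim ((\<lambda>e. ptensor J (z e)) ` E)) - 1) + 1 \<le> int (tv.dim ((\<lambda>e. ptensor M' (z e)) ` E))"
      by (rule less.hyps[OF cP fM' pM' nz' nsr])
    have "(\<Sum>J\<in>P. int (tv.dim ((\<lambda>e. ptensor J (z e)) ` E)) - 1)
        = (int (tv.dim ((\<lambda>e. ptensor J (z e)) ` E)) - 1) + (\<Sum>J\<in>P - {J}. int (tv.dim ((\<lambda>e. ptensor J (z e)) ` E)) - 1)"
      by (rule sum.remove[OF fP J])
    then show ?thesis using IH st2 unfolding eq by linarith
  qed
qed


definition sgn_c :: "nat + nat \<Rightarrow> 'a::field" where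
  "sgn_c i = (case i of Inl _ \<Rightarrow> 1 | Inr _ \<Rightarrow> -1)"

lemma sgn_c_simps[simp]: "sgn_c (Inl a) = 1" "sgn_c (Inr b) = -1"
  by (simp_all add: sgn_c_def)

lemma E_decomp:
  assumes "finite (E :: (nat + nat) set)"
  shows "finite {a. Inl a \<in> E}" "finite {b. Inr b \<in> E}"
    "E = Inl ` {a. Inl a \<in> E} \<union> Inr ` {b. Inr b \<in> E}"
    "card E = card {a. Inl a \<in> E} + card {b. Inr b \<in> E}"
proof -
  define A where "A = (Inl :: nat \<Rightarrow> nat + nat) ` {a. Inl a \<in> E}"
  define B where "B = (Inr :: nat \<Rightarrow> nat + nat) ` {b. Inr b \<in> E}"
  show f1: "finite {a. Inl a \<in> E}" using finite_vimageI[OF assms, of Inl] by (simp add: vimage_def)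
  show f2: "finite {b. Inr b \<in> E}" using finite_vimageI[OF assms, of Inr] by (simp add: vimage_def)
  have e: "E = A \<union> B"
  proof
    show "E \<subseteq> A \<union> B"
    proof
      fix x assume "x \<in> E" then show "x \<in> A \<union> B" unfolding A_def B_def
        by (cases x) auto
    qed
  qed (auto simp: A_def B_def)
  then show "E = Inl ` {a. Inl a \<in> E} \<union> Inr ` {b. Inr b \<in> E}" unfolding A_def B_def .
  have "card (A \<union> B) = card A + card B"
  proof (rule card_Un_disjoint)
    show "finite A" using f1 unfolding A_def by simp
    show "finite B" using f2 unfolding B_def by simp
    show "A \<inter> B = {}" unfolding A_def B_def by blast
  qed
  moreover have "card A = card {a. Inl a \<in> E}" unfolding A_def by (simp add: card_image)
  moreover have "card B = card {b. Inr b \<in> E}" unfolding B_def by (simp add: card_image)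
  ultimately show "card E = card {a. Inl a \<in> E} + card {b. Inr b \<in> E}" using e by simp
qed

lemma count_claim:
  fixes z :: "nat + nat \<Rightarrow> nat \<Rightarrow> 'b \<Rightarrow> 'a::field" and xf :: "nat \<Rightarrow> nat \<Rightarrow> 'b \<Rightarrow> 'a"
  assumes H1: "\<And>a. z (Inl a) = xf a"
    and H2: "\<forall>i\<in>EE. ptensor {1..m} (z i) \<noteq> 0"
    and H3: "\<forall>S. S \<subseteq> {1..n} \<and> 2 \<le> card S \<longrightarrow>
           (\<exists>P. partition_on {1..m} P \<and> 2 * int (card S) \<le> (\<Sum>J\<in>P. int (dJS xf J S) - 1) + 1)"
    and H4: "finite EE" "\<And>a. Inl a \<in> EE \<Longrightarrow> a \<in> {1..n}"
  shows "E \<subseteq> EE \<Longrightarrow> (\<Sum>i\<in>E. tscale (sgn_c i) (ptensor {1..m} (z i))) = 0 \<Longrightarrow>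
    card {a. Inl a \<in> E} \<le> card {b. Inr b \<in> E} \<and>
    (card {a. Inl a \<in> E} = card {b. Inr b \<in> E} \<longrightarrow>
      image_mset (\<lambda>a. ptensor {1..m} (z (Inl a))) (mset_set {a. Inl a \<in> E})
      = image_mset (\<lambda>b. ptensor {1..m} (z (Inr b))) (mset_set {b. Inr b \<in> E}))"
proof (induction "card E" arbitrary: E rule: less_induct)
  case less
  define w where "w = (\<lambda>i. ptensor {1..m} (z i))"
  define SL where "SL = {a. Inl a \<in> E}"
  define SR where "SR = {b. Inr b \<in> E}"
  have fE: "finite E" using less.prems(1) H4(1) finite_subset by blast
  note ED = E_decomp[OF fE, folded SL_def SR_def]
  have rel: "(\<Sum>i\<in>E. tscale (sgn_c i) (w i)) = 0" using less.prems(2) unfolding w_def .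
  have wnz: "\<forall>i\<in>E. w i \<noteq> 0" using H2 less.prems(1) unfolding w_def by blast
  show ?case
  proof (cases "card SL \<le> 1")
    case True
    show ?thesis
    proof (cases "card SL = 0")
      case True
      then have SL0: "SL = {}" using ED(1) by simp
      have "card SR = 0 \<Longrightarrow> SR = {}" using ED(2) by simp
      then show ?thesis using SL0 True unfolding SL_def[symmetric] SR_def[symmetric] by auto
    next
      case False
      then have "card SL = 1" using \<open>card SL \<le> 1\<close> by simp
      then obtain a where a: "SL = {a}" using card_1_singletonE by blast
      have SRne: "SR \<noteq> {}"
      proof
        assume "SR = {}"
        then have "E = {Inl a}" using ED(3) a by simp
        then have "w (Inl a) = 0" using rel by (simp add: tv.scale_one)
        then show False using wnz \<open>E = {Inl a}\<close> by simp
      qed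
      then have c1: "1 \<le> card SR" using ED(2) by (simp add: Suc_leI card_gt_0_iff)
      have "card SR = 1 \<longrightarrow> image_mset (\<lambda>a. w (Inl a)) (mset_set SL) = image_mset (\<lambda>b. w (Inr b)) (mset_set SR)"
      proof
        assume "card SR = 1"
        then obtain b where b: "SR = {b}" using card_1_singletonE by blast
        then have E2: "E = {Inl a, Inr b}" using ED(3) a by auto
        have "tscale 1 (w (Inl a)) + tscale (-1) (w (Inr b)) = 0"
          using rel unfolding E2 by simp
        then have "w (Inl a) = w (Inr b)" by (simp add: tv.scale_one tscale_def fun_eq_iff)
        then show "image_mset (\<lambda>a. w (Inl a)) (mset_set SL) = image_mset (\<lambda>b. w (Inr b)) (mset_set SR)"
          using a b by simp
      qed
      moreover have "card SL \<le> card SR" using c1 \<open>card SL = 1\<close> by linarith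
      ultimately have "card SL \<le> card SR \<and> (card SL = card SR \<longrightarrow> image_mset (\<lambda>a. w (Inl a)) (mset_set SL) = image_mset (\<lambda>b. w (Inr b)) (mset_set SR))"
        using \<open>card SL = 1\<close> by metis
      then show ?thesis unfolding SL_def SR_def w_def .
    qed
  next
    case False
    then have SL2: "2 \<le> card SL" by simp
    show ?thesis
    proof (cases "nonsplit w E")
      case True
      have SLsub: "SL \<subseteq> {1..n}" using H4(2) less.prems(1) unfolding SL_def by blast
      obtain P where P: "partition_on {1..m} P" "2 * int (card SL) \<le> (\<Sum>J\<in>P. int (dJS xf J SL) - 1) + 1"
        using H3 SLsub SL2 by blast
      have fP: "finite P" using P(1) unfolding partition_on_def
        by (metis Sup_upper finite_UnionD finite_subset finite_atLeastAtMost)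
      have Ene: "E \<noteq> {}" using SL2 unfolding SL_def by auto
      have dle: "dJS xf J SL \<le> tv.dim ((\<lambda>i. ptensor J (z i)) ` E)" for J
      proof -
        have "(\<lambda>a. ptensor J (xf a)) ` SL \<subseteq> (\<lambda>i. ptensor J (z i)) ` E"
        proof
          fix x assume "x \<in> (\<lambda>a. ptensor J (xf a)) ` SL"
          then obtain a where a: "Inl a \<in> E" "x = ptensor J (xf a)" unfolding SL_def by blast
          then have "x = ptensor J (z (Inl a))" using H1 by simp
          then show "x \<in> (\<lambda>i. ptensor J (z i)) ` E" using a(1) by blast
        qed
        then have "(\<lambda>a. ptensor J (xf a)) ` SL \<subseteq> tv.span ((\<lambda>i. ptensor J (z i)) ` E)"
          using tv.span_superset by blast
        then show ?thesis unfolding dJS_def by (rule dim_mono') (use fE in auto)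
      qed
      have "(\<Sum>J\<in>P. int (dJS xf J SL) - 1) \<le> (\<Sum>J\<in>P. int (tv.dim ((\<lambda>i. ptensor J (z i)) ` E)) - 1)"
      proof (rule sum_mono)
        fix J show "int (dJS xf J SL) - 1 \<le> int (tv.dim ((\<lambda>i. ptensor J (z i)) ` E)) - 1"
          using dle[of J] by linarith
      qed
      also have "\<dots> + 1 \<le> int (tv.dim ((\<lambda>i. ptensor {1..m} (z i)) ` E))"
        by (rule ST[OF fE Ene finite_atLeastAtMost P(1)]) (use wnz True in \<open>auto simp: w_def\<close>)
      finally have st: "2 * int (card SL) \<le> int (tv.dim (w ` E))" using P(2) unfolding w_def by linarith
      obtain a where "a \<in> SL" using SL2 by (metis card.empty ex_in_conv not_numeral_le_zero)
      then have aE: "Inl a \<in> E" unfolding SL_def by simp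
      have "tv.dim (w ` E) + 1 \<le> card E"
        by (rule dim_dep[OF fE rel aE]) simp
      then have "card SL < card SR" using st ED(4) by linarith
      then show ?thesis unfolding SL_def SR_def by simp
    next
      case False
      then obtain Y0 where Y0: "Y0 \<subseteq> E" "Y0 \<noteq> {}" "Y0 \<noteq> E" "tv.span (w ` Y0) \<inter> tv.span (w ` (E - Y0)) \<subseteq> {0}"
        unfolding nonsplit_def by blast
      define Z0 where "Z0 = E - Y0"
      have fY: "finite Y0" "finite Z0" using fE Y0(1) finite_subset unfolding Z0_def by auto
      define s1 where "s1 = (\<Sum>i\<in>Y0. tscale (sgn_c i) (w i))"
      define s2 where "s2 = (\<Sum>i\<in>Z0. tscale (sgn_c i) (w i))"
      have "s1 + s2 = 0" using rel sum.subset_diff[OF Y0(1) fE, of "\<lambda>i. tscale (sgn_c i) (w i)"] unfolding s1_def s2_def Z0_def by (simp add: add.commute)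
      then have s12: "s1 = - s2" by (simp add: eq_neg_iff_add_eq_0)
      have "s1 \<in> tv.span (w ` Y0)" unfolding s1_def by (intro tv.span_sum tv.span_scale tv.span_base) auto
      moreover have "s2 \<in> tv.span (w ` Z0)" unfolding s2_def by (intro tv.span_sum tv.span_scale tv.span_base) auto
      then have "s1 \<in> tv.span (w ` Z0)" using s12 tv.span_neg by metis
      ultimately have "s1 = 0" using Y0(4) unfolding Z0_def by blast
      then have z1: "s1 = 0" "s2 = 0" using s12 by auto
      have cY: "card Y0 < card E" using Y0(1,3) fE by (meson psubsetI psubset_card_mono)
      have "Z0 \<subset> E" using Y0(1,2) unfolding Z0_def by blast
      then have cZ: "card Z0 < card E" using fE by (rule psubset_card_mono[rotated])
      have IY: "card {a. Inl a \<in> Y0} \<le> card {b. Inr b \<in> Y0} \<and>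
        (card {a. Inl a \<in> Y0} = card {b. Inr b \<in> Y0} \<longrightarrow>
        image_mset (\<lambda>a. w (Inl a)) (mset_set {a. Inl a \<in> Y0}) = image_mset (\<lambda>b. w (Inr b)) (mset_set {b. Inr b \<in> Y0}))"
        using less.hyps[OF cY] Y0(1) less.prems(1) z1 unfolding s1_def w_def by blast
      have IZ: "card {a. Inl a \<in> Z0} \<le> card {b. Inr b \<in> Z0} \<and>
        (card {a. Inl a \<in> Z0} = card {b. Inr b \<in> Z0} \<longrightarrow>
        image_mset (\<lambda>a. w (Inl a)) (mset_set {a. Inl a \<in> Z0}) = image_mset (\<lambda>b. w (Inr b)) (mset_set {b. Inr b \<in> Z0}))"
        using less.hyps[OF cZ] less.prems(1) z1 unfolding s2_def w_def Z0_def by blast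
      have EYZ: "E = Y0 \<union> Z0" "Y0 \<inter> Z0 = {}" using Y0(1) unfolding Z0_def by auto
      have L: "SL = {a. Inl a \<in> Y0} \<union> {a. Inl a \<in> Z0}" "{a. Inl a \<in> Y0} \<inter> {a. Inl a \<in> Z0} = {}"
        unfolding SL_def using EYZ by auto
      have R: "SR = {b. Inr b \<in> Y0} \<union> {b. Inr b \<in> Z0}" "{b. Inr b \<in> Y0} \<inter> {b. Inr b \<in> Z0} = {}"
        unfolding SR_def using EYZ by auto
      note DY = E_decomp[OF fY(1)] and DZ = E_decomp[OF fY(2)]
      have cL: "card SL = card {a. Inl a \<in> Y0} + card {a. Inl a \<in> Z0}"
        unfolding L(1) by (rule card_Un_disjoint[OF DY(1) DZ(1) L(2)])
      have cR: "card SR = card {b. Inr b \<in> Y0} + card {b. Inr b \<in> Z0}"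
        unfolding R(1) by (rule card_Un_disjoint[OF DY(2) DZ(2) R(2)])
      have mL: "mset_set SL = mset_set {a. Inl a \<in> Y0} + mset_set {a. Inl a \<in> Z0}"
        unfolding L(1) by (rule mset_set_Union[OF DY(1) DZ(1) L(2)])
      have mR: "mset_set SR = mset_set {b. Inr b \<in> Y0} + mset_set {b. Inr b \<in> Z0}"
        unfolding R(1) by (rule mset_set_Union[OF DY(2) DZ(2) R(2)])
      have "card SL \<le> card SR" using cL cR IY IZ by linarith
      moreover have "card SL = card SR \<longrightarrow> image_mset (\<lambda>a. w (Inl a)) (mset_set SL) = image_mset (\<lambda>b. w (Inr b)) (mset_set SR)"
      proof
        assume "card SL = card SR"
        then have "card {a. Inl a \<in> Y0} = card {b. Inr b \<in> Y0}" "card {a. Inl a \<in> Z0} = card {b. Inr b \<in> Z0}"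
          using cL cR IY IZ by linarith+
        then show "image_mset (\<lambda>a. w (Inl a)) (mset_set SL) = image_mset (\<lambda>b. w (Inr b)) (mset_set SR)"
          using IY IZ unfolding mL mR by simp
      qed
      ultimately show ?thesis unfolding SL_def SR_def w_def by blast
    qed
  qed
qed


lemma tscale_m1: "tscale (-1) (x :: 'c \<Rightarrow> 'a::field) = - x"
  by (simp add: tscale_def fun_eq_iff)

theorem theorem5p2:
  fixes B :: "nat \<Rightarrow> 'b set"
    and xf :: "nat \<Rightarrow> nat \<Rightarrow> 'b \<Rightarrow> 'a::field"
    and n m :: nat
  assumes "n \<ge> 2" and "m \<ge> 3"
    and "\<forall>a\<in>{1..n}. \<forall>j\<in>{1..m}. xf a j \<in> fsupp_space (B j)"
    and "\<forall>a\<in>{1..n}. ptensor {1..m} (xf a) \<noteq> 0"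
    and "\<forall>S. S \<subseteq> {1..n} \<and> 2 \<le> card S \<longrightarrow>
           (\<exists>P. partition_on {1..m} P \<and>
                2 * int (card S) \<le> (\<Sum>J\<in>P. int (dJS xf J S) - 1) + 1)"
  shows "unique_tensor_rank_decomp B m n (\<lambda>a. ptensor {1..m} (xf a))"
  unfolding unique_tensor_rank_decomp_def
proof (intro allI impI)
  fix r y
  assume h: "r \<le> n \<and> (\<forall>a\<in>{1..r}. is_product_tensor B m (y a)) \<and>
            (\<Sum>a\<in>{1..r}. y a) = (\<Sum>a\<in>{1..n}. ptensor {1..m} (xf a))"
  have "\<forall>a\<in>{1..r}. \<exists>z. y a \<noteq> 0 \<and> y a = ptensor {1..m} z"
    using h unfolding is_product_tensor_def by blast
  then have "\<exists>zy. \<forall>a\<in>{1..r}. y a \<noteq> 0 \<and> y a = ptensor {1..m} (zy a)" by (rule bchoice)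
  then obtain zy where zy: "\<forall>a\<in>{1..r}. y a \<noteq> 0 \<and> y a = ptensor {1..m} (zy a)" by blast
  define z :: "nat + nat \<Rightarrow> nat \<Rightarrow> 'b \<Rightarrow> 'a" where "z = case_sum xf zy"
  define EE :: "(nat + nat) set" where "EE = Inl ` {1..n} \<union> Inr ` {1..r}"
  have H1: "\<And>a. z (Inl a) = xf a" by (simp add: z_def)
  have H2: "\<forall>i\<in>EE. ptensor {1..m} (z i) \<noteq> 0" using assms(4) zy by (auto simp: EE_def z_def)
  have H4: "finite EE" "\<And>a. Inl a \<in> EE \<Longrightarrow> a \<in> {1..n}" by (auto simp: EE_def)
  have dis: "Inl ` {1..n} \<inter> Inr ` {1..r} = ({} :: (nat + nat) set)" by blast
  have "(\<Sum>i\<in>EE. tscale (sgn_c i) (ptensor {1..m} (z i)))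
      = (\<Sum>i\<in>Inl ` {1..n}. tscale (sgn_c i) (ptensor {1..m} (z i))) + (\<Sum>i\<in>Inr ` {1..r}. tscale (sgn_c i) (ptensor {1..m} (z i)))"
    unfolding EE_def by (rule sum.union_disjoint[OF _ _ dis]) auto
  also have "(\<Sum>i\<in>Inl ` {1..n}. tscale (sgn_c i) (ptensor {1..m} (z i))) = (\<Sum>a\<in>{1..n}. ptensor {1..m} (xf a))"
    by (simp add: sum.reindex z_def tv.scale_one)
  also have "(\<Sum>i\<in>Inr ` {1..r}. tscale (sgn_c i) (ptensor {1..m} (z i))) = - (\<Sum>a\<in>{1..r}. y a)"
  proof -
    have "(\<Sum>i\<in>Inr ` {1..r}. tscale (sgn_c i) (ptensor {1..m} (z i))) = (\<Sum>b\<in>{1..r}. - ptensor {1..m} (zy b))"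
      by (simp add: sum.reindex z_def tscale_m1)
    also have "\<dots> = (\<Sum>b\<in>{1..r}. - y b)" using zy by (intro sum.cong) auto
    finally show ?thesis by (simp add: sum_negf)
  qed
  finally have calc: "(\<Sum>i\<in>EE. tscale (sgn_c i) (ptensor {1..m} (z i))) = (\<Sum>a\<in>{1..n}. ptensor {1..m} (xf a)) + - (\<Sum>a\<in>{1..r}. y a)" .
  have e: "(\<Sum>a\<in>{1..r}. y a) = (\<Sum>a\<in>{1..n}. ptensor {1..m} (xf a))" using h by blast
  have rel: "(\<Sum>i\<in>EE. tscale (sgn_c i) (ptensor {1..m} (z i))) = 0"
    unfolding calc e by (rule add.right_inverse)
  have cc: "card {a. Inl a \<in> EE} \<le> card {b. Inr b \<in> EE} \<and>
    (card {a. Inl a \<in> EE} = card {b. Inr b \<in> EE} \<longrightarrow>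
      image_mset (\<lambda>a. ptensor {1..m} (z (Inl a))) (mset_set {a. Inl a \<in> EE})
      = image_mset (\<lambda>b. ptensor {1..m} (z (Inr b))) (mset_set {b. Inr b \<in> EE}))"
    by (rule count_claim[OF H1 H2 assms(5) H4 order_refl rel])
  have L: "{a. Inl a \<in> EE} = {1..n}" and R: "{b. Inr b \<in> EE} = {1..r}" by (auto simp: EE_def)
  have rn: "r = n" using cc h unfolding L R by simp
  have "image_mset (\<lambda>a. ptensor {1..m} (xf a)) (mset_set {1..n}) = image_mset (\<lambda>b. ptensor {1..m} (zy b)) (mset_set {1..r})"
    using cc rn unfolding L R by (simp add: z_def)
  also have "\<dots> = image_mset y (mset_set {1..r})"
    using zy by (intro image_mset_cong) auto
  finally show "r = n \<and> image_mset y (mset_set {1..r}) = image_mset (\<lambda>a. ptensor {1..m} (xf a)) (mset_set {1..n})"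
    using rn by simp
qed


end
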